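(* Let $F\subset\mathbb{Q}_p$ be a nonempty finite set. Then the uniform probability measure $\delta_F=\frac{1}{\sharp F}\sum_{c\in F}\delta_c$ is a spectral measure if and only if $\sharp F=p^{\sharp I_F}$.
   Context: $p\ge2$ is a prime and $v_p$ is the $p$-adic valuation on $\mathbb{Q}_p$. Characters: $\chi(x)=e^{2\pi i\{x\}}$, where $\{x\}=\sum_{n=v_p(x)}^{-1}a_np^n$ is the fractional part of $x=\sum_{n\ge v_p(x)}a_np^n$ with digits $a_n\in\{0,\dots,p-1\}$. Also $\chi_y(x)=\chi(yx)$. Spectral measure: a Borel probability measure $\mu$ on $\mathbb{Q}_p$ is spectral if there is $\Lambda\subset\mathbb{Q}_p$ such that $\{\chi_\lambda\}_{\lambda\in\Lambda}$ is an orthonormal basis of $L^2(\mu)$. Admissible $p$-orders: $I_F=\{v_p(x-y):x,y\in F,\ x\neq y\}$. *)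

theory Defs
  imports "HOL-Analysis.Analysis" "HOL-Computational_Algebra.Primes"
begin

text \<open>Concrete model of the p-adic numbers: an element x = sum_{n >= v} a_n p^n is represented
by its digit function a :: int => nat (digits < p, vanishing for all sufficiently negative n).
The p-adic expansion is unique, so this is a faithful carrier for Q_p.\<close>

definition Qp :: "nat \<Rightarrow> (int \<Rightarrow> nat) set" where
  "Qp p = {d. (\<forall>n. d n < p) \<and> (\<exists>N. \<forall>n<N. d n = 0)}"

definition ptrunc :: "nat \<Rightarrow> (int \<Rightarrow> nat) \<Rightarrow> int \<Rightarrow> real" where
  "ptrunc p x k = (\<Sum>n\<in>{n. n < k \<and> x n \<noteq> 0}. real (x n) * real p powi n)"

definition pcong :: "nat \<Rightarrow> int \<Rightarrow> real \<Rightarrow> real \<Rightarrow> bool" where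
  "pcong p k r s \<longleftrightarrow> (\<exists>m::int. r - s = of_int m * real p powi k)"

definition psub :: "nat \<Rightarrow> (int \<Rightarrow> nat) \<Rightarrow> (int \<Rightarrow> nat) \<Rightarrow> (int \<Rightarrow> nat)" where
  "psub p x y = (THE z. z \<in> Qp p \<and>
      (\<forall>k. pcong p k (ptrunc p z k) (ptrunc p x k - ptrunc p y k)))"

definition pmul :: "nat \<Rightarrow> (int \<Rightarrow> nat) \<Rightarrow> (int \<Rightarrow> nat) \<Rightarrow> (int \<Rightarrow> nat)" where
  "pmul p x y = (THE z. z \<in> Qp p \<and>
      (\<forall>k. \<exists>K. \<forall>K'\<ge>K. pcong p k (ptrunc p z k) (ptrunc p x K' * ptrunc p y K')))"

definition pval :: "(int \<Rightarrow> nat) \<Rightarrow> int" where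
  "pval x = (THE n. x n \<noteq> 0 \<and> (\<forall>m<n. x m = 0))"

definition pfrac :: "nat \<Rightarrow> (int \<Rightarrow> nat) \<Rightarrow> real" where
  "pfrac p x = ptrunc p x 0"

definition pchi :: "nat \<Rightarrow> (int \<Rightarrow> nat) \<Rightarrow> complex" where
  "pchi p x = cis (2 * pi * pfrac p x)"

definition pchi_y :: "nat \<Rightarrow> (int \<Rightarrow> nat) \<Rightarrow> (int \<Rightarrow> nat) \<Rightarrow> complex" where
  "pchi_y p y x = pchi p (pmul p y x)"

definition admissible_orders :: "nat \<Rightarrow> (int \<Rightarrow> nat) set \<Rightarrow> int set" where
  "admissible_orders p F = {pval (psub p x y) | x y. x \<in> F \<and> y \<in> F \<and> x \<noteq> y}"

text \<open>Inner product of L^2(delta_F), delta_F the uniform probability measure on the finite set F: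
  <f,g> = (1/#F) sum_{c in F} f(c) conj(g(c)).  Functions are identified when they agree on F.\<close>
definition unif_inner :: "(int \<Rightarrow> nat) set \<Rightarrow> ((int \<Rightarrow> nat) \<Rightarrow> complex)
    \<Rightarrow> ((int \<Rightarrow> nat) \<Rightarrow> complex) \<Rightarrow> complex" where
  "unif_inner F f g = (\<Sum>c\<in>F. f c * cnj (g c)) / of_nat (card F)"

text \<open>delta_F is spectral: some Lambda in Q_p such that {chi_lambda} is an orthonormal basis of
L^2(delta_F) (orthonormal, and its span -- finite linear combinations -- is all of L^2(delta_F),
which is finite dimensional).\<close>
definition spectral_unif :: "nat \<Rightarrow> (int \<Rightarrow> nat) set \<Rightarrow> bool" where
  "spectral_unif p F \<longleftrightarrow> (\<exists>\<Lambda>. \<Lambda> \<subseteq> Qp p \<and>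
     (\<forall>\<mu>\<in>\<Lambda>. \<forall>\<nu>\<in>\<Lambda>. unif_inner F (pchi_y p \<mu>) (pchi_y p \<nu>) = (if \<mu> = \<nu> then 1 else 0)) \<and>
     (\<forall>f :: (int \<Rightarrow> nat) \<Rightarrow> complex. \<exists>\<Lambda>0 c. finite \<Lambda>0 \<and> \<Lambda>0 \<subseteq> \<Lambda> \<and>
        (\<forall>x\<in>F. f x = (\<Sum>\<mu>\<in>\<Lambda>0. c \<mu> * pchi_y p \<mu> x))))"

end

theory Submission
  imports Defs "HOL-Computational_Algebra.Polynomial_Factorial"
begin


definition pdv :: "int \<Rightarrow> int poly \<Rightarrow> bool" where
  "pdv p f \<longleftrightarrow> (\<forall>i. p dvd coeff f i)"

lemma pdv_0[simp]: "pdv p 0" by (simp add: pdv_def)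
lemma pdv_add: "pdv p f \<Longrightarrow> pdv p g \<Longrightarrow> pdv p (f + g)" by (simp add: pdv_def)
lemma pdv_diff: "pdv p f \<Longrightarrow> pdv p g \<Longrightarrow> pdv p (f - g)" by (simp add: pdv_def)
lemma pdv_uminus: "pdv p f \<Longrightarrow> pdv p (- f)" by (simp add: pdv_def)
lemma pdv_mult_left: "pdv p f \<Longrightarrow> pdv p (f * g)"
  unfolding pdv_def coeff_mult by (auto intro!: dvd_sum dvd_mult2)
lemma pdv_mult_right: "pdv p g \<Longrightarrow> pdv p (f * g)"
  using pdv_mult_left[of p g f] by (simp add: mult.commute)
lemma pdv_sum: "(\<And>i. i \<in> A \<Longrightarrow> pdv p (f i)) \<Longrightarrow> pdv p (sum f A)"
  by (induction A rule: infinite_finite_induct) (auto intro: pdv_add)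
lemma pdv_of_nat: "p dvd int m \<Longrightarrow> pdv p (of_nat m * g)"
  by (simp add: pdv_def of_nat_poly)

definition pcg :: "int \<Rightarrow> int poly \<Rightarrow> int poly \<Rightarrow> bool" where
  "pcg p f g \<longleftrightarrow> pdv p (f - g)"

lemma pcg_refl: "pcg p f f" by (simp add: pcg_def)
lemma pcg_sym: "pcg p f g \<Longrightarrow> pcg p g f"
  unfolding pcg_def using pdv_uminus[of p "f - g"] by simp
lemma pcg_trans: "pcg p f g \<Longrightarrow> pcg p g h \<Longrightarrow> pcg p f h"
  unfolding pcg_def using pdv_add[of p "f - g" "g - h"] by simp
lemma pcg_add: "pcg p f f' \<Longrightarrow> pcg p g g' \<Longrightarrow> pcg p (f + g) (f' + g')"
  unfolding pcg_def using pdv_add[of p "f - f'" "g - g'"] by (simp add: algebra_simps)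
lemma pcg_diff: "pcg p f f' \<Longrightarrow> pcg p g g' \<Longrightarrow> pcg p (f - g) (f' - g')"
  unfolding pcg_def using pdv_diff[of p "f - f'" "g - g'"] by (simp add: algebra_simps)
lemma pcg_mult: "pcg p f f' \<Longrightarrow> pcg p g g' \<Longrightarrow> pcg p (f * g) (f' * g')"
proof -
  assume a: "pcg p f f'" "pcg p g g'"
  have "f * g - f' * g' = (f - f') * g + f' * (g - g')" by (simp add: algebra_simps)
  moreover have "pdv p ((f - f') * g + f' * (g - g'))"
    using a unfolding pcg_def by (intro pdv_add pdv_mult_left pdv_mult_right)
  ultimately show ?thesis unfolding pcg_def by simp
qed
lemma pcg_power: "pcg p f g \<Longrightarrow> pcg p (f ^ n) (g ^ n)"
  by (induction n) (auto intro: pcg_mult pcg_refl)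

lemma freshman:
  fixes A B :: "int poly"
  assumes "prime p"
  shows "pcg (int p) ((A + B) ^ p) (A ^ p + B ^ p)"
proof -
  have p0: "p > 0" using assms prime_gt_0_nat by blast
  have "(A + B) ^ p = (\<Sum>k\<le>p. of_nat (p choose k) * A ^ k * B ^ (p - k))"
    by (rule binomial_ring)
  also have "{..p} = insert p (insert 0 {1..<p})" using p0 by auto
  also have "(\<Sum>k\<in>insert p (insert 0 {1..<p}). of_nat (p choose k) * A ^ k * B ^ (p - k))
      = A ^ p + (B ^ p + (\<Sum>k\<in>{1..<p}. of_nat (p choose k) * A ^ k * B ^ (p - k)))"
    using p0 by (simp add: sum.insert)
  finally have e: "(A + B) ^ p - (A ^ p + B ^ p) = (\<Sum>k\<in>{1..<p}. of_nat (p choose k) * (A ^ k * B ^ (p - k)))"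
    by (simp add: mult.assoc)
  have "pdv (int p) (\<Sum>k\<in>{1..<p}. of_nat (p choose k) * (A ^ k * B ^ (p - k)))"
  proof (rule pdv_sum)
    fix k assume "k \<in> {1..<p}"
    then have "p dvd (p choose k)" using dvd_choose_prime[of k p] assms by auto
    then show "pdv (int p) (of_nat (p choose k) * (A ^ k * B ^ (p - k)))"
      by (intro pdv_of_nat) simp
  qed
  then show ?thesis unfolding pcg_def e .
qed

lemma X1_eq: "[:1::int,1:] = monom 1 1 + 1"
  by (simp add: monom_Suc one_pCons monom_0)

lemma frob_pow:
  assumes "prime p"
  shows "pcg (int p) ([:1,1:] ^ (p ^ j)) (monom 1 (p ^ j) + 1)"
proof (induction j)
  case 0
  show ?case using X1_eq by (simp add: pcg_refl)
next
  case (Suc j)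
  have a: "[:1::int,1:] ^ (p ^ Suc j) = ([:1::int,1:] ^ (p ^ j)) ^ p"
    by (simp add: power_mult[symmetric] power_Suc2 del: power_Suc)
  have b: "pcg (int p) (([:1::int,1:] ^ (p ^ j)) ^ p) ((monom 1 (p ^ j) + 1) ^ p)"
    using Suc by (rule pcg_power)
  have c: "pcg (int p) ((monom 1 (p ^ j) + 1) ^ p) ((monom 1 (p ^ j)) ^ p + 1 ^ p)"
    by (rule freshman[OF assms])
  have d: "(monom (1::int) (p ^ j)) ^ p + 1 ^ p = monom 1 (p ^ Suc j) + 1"
    by (simp add: monom_power power_Suc2 mult.commute del: power_Suc)
  show ?case unfolding a using pcg_trans[OF b c] unfolding d .
qed

definition Phi :: "nat \<Rightarrow> nat \<Rightarrow> int poly" where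
  "Phi p q = (\<Sum>k<p. monom 1 (k * q))"

lemma coeff_Phi:
  assumes "q > 0"
  shows "coeff (Phi p q) j = (if q dvd j \<and> j div q < p then 1 else 0)"
proof -
  have "coeff (Phi p q) j = (\<Sum>k<p. if k * q = j then 1 else 0)"
    by (simp add: Phi_def coeff_sum coeff_monom)
  also have "\<dots> = (\<Sum>k<p. if k = j div q then (if q dvd j then 1 else 0) else 0)"
    by (rule sum.cong) (use assms in auto)
  also have "\<dots> = (if q dvd j \<and> j div q < p then 1 else 0)"
    by (simp add: sum.delta')
  finally show ?thesis .
qed

lemma degree_Phi:
  assumes "q > 0" "p \<ge> 1"
  shows "degree (Phi p q) = (p - 1) * q" and "coeff (Phi p q) ((p - 1) * q) = 1"
proof -
  show c: "coeff (Phi p q) ((p - 1) * q) = 1"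
    using assms by (simp add: coeff_Phi)
  have "degree (Phi p q) \<le> (p - 1) * q"
  proof (rule degree_le, intro allI impI)
    fix i assume i: "(p - 1) * q < i"
    show "coeff (Phi p q) i = 0"
    proof (cases "q dvd i \<and> i div q < p")
      case True
      then have "i div q \<le> p - 1" by linarith
      then have "i div q * q \<le> (p - 1) * q" by (rule mult_right_mono) simp
      moreover have "i div q * q = i" using True by simp
      ultimately have False using i by linarith
      then show ?thesis ..
    next
      case False
      then show ?thesis using assms by (simp only: coeff_Phi if_False)
    qed
  qed
  moreover have "(p - 1) * q \<le> degree (Phi p q)"
    using c by (intro le_degree) simp
  ultimately show "degree (Phi p q) = (p - 1) * q" by simp
qed

lemma monom_pcompose: "(monom 1 n) \<circ>\<^sub>p (r::int poly) = r ^ n"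
  by (induction n) (simp_all add: monom_Suc pcompose_pCons monom_0)


lemma Phi_pcompose_cong:
  assumes "prime p" "M \<ge> 1" and qd: "q = p ^ (M - 1)"
  shows "pdv (int p) (Phi p q \<circ>\<^sub>p [:1,1:] - monom 1 ((p - 1) * q))"
proof -
  let ?X = "[:1::int,1:]"
  define Y where "Y = ?X ^ q"
  define Phi1 where "Phi1 = Phi p q \<circ>\<^sub>p ?X"
  have P: "p ^ M = q * p" using assms(2) unfolding qd
    by (metis Suc_diff_le diff_Suc_1 power_Suc2)
  have Phi1: "Phi1 = (\<Sum>k<p. Y ^ k)"
    unfolding Phi1_def Phi_def pcompose_sum monom_pcompose Y_def
    by (simp add: power_mult[symmetric] mult.commute)
  have geo: "Y ^ p - 1 = (Y - 1) * Phi1"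
    unfolding Phi1 by (simp add: power_diff_1_eq)
  have c1: "pcg (int p) Y (monom 1 q + 1)" unfolding Y_def qd by (rule frob_pow[OF assms(1)])
  have "Y ^ p = ?X ^ (p ^ M)" by (simp add: Y_def P power_mult)
  then have c2: "pcg (int p) (Y ^ p - 1) (monom 1 (p ^ M))"
    using pcg_diff[OF frob_pow[OF assms(1), of M] pcg_refl[of _ 1]] by simp
  have c3: "pcg (int p) (Y - 1) (monom 1 q)"
    using pcg_diff[OF c1 pcg_refl[of _ 1]] by simp
  have c4: "pcg (int p) ((Y - 1) * Phi1) (monom 1 q * Phi1)"
    by (rule pcg_mult[OF c3 pcg_refl])
  have c5: "pcg (int p) (monom 1 q * Phi1) (monom 1 (p ^ M))"
    using pcg_trans[OF pcg_sym[OF c4]] c2 unfolding geo by blast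
  have "p ^ M = q + (p - 1) * q" unfolding P using prime_gt_0_nat[OF assms(1)]
    by (cases p) auto
  then have "monom (1::int) (p ^ M) = monom 1 q * monom 1 ((p - 1) * q)"
    by (simp add: mult_monom)
  then have "pdv (int p) (monom 1 q * (Phi1 - monom 1 ((p - 1) * q)))"
    using c5 unfolding pcg_def by (simp add: algebra_simps)
  then have "pdv (int p) (Phi1 - monom 1 ((p - 1) * q))"
    unfolding pdv_def
  proof (intro allI)
    fix j assume h: "\<forall>i. int p dvd coeff (monom 1 q * (Phi1 - monom 1 ((p - 1) * q))) i"
    show "int p dvd coeff (Phi1 - monom 1 ((p - 1) * q)) j"
      using h[rule_format, of "q + j"] by (simp add: coeff_monom_mult)
  qed
  then show ?thesis unfolding Phi1_def .
qed

lemma no_factor: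
  assumes pr: "prime p" and M: "M \<ge> 1" and qd: "q = p ^ (M - 1)"
    and AB: "A * B = Phi p q" and dA: "degree A \<ge> 1" and dB: "degree B \<ge> 1"
  shows False
proof -
  let ?X = "[:1::int,1:]"
  define A1 B1 Phi1 where "A1 = A \<circ>\<^sub>p ?X" and "B1 = B \<circ>\<^sub>p ?X" and "Phi1 = Phi p q \<circ>\<^sub>p ?X"
  have p2: "p \<ge> 2" using pr prime_ge_2_nat by blast
  have q0: "q > 0" using p2 qd by simp
  have degPhi: "degree (Phi p q) = (p - 1) * q" and lcPhi: "coeff (Phi p q) ((p - 1) * q) = 1"
    using degree_Phi[OF q0] p2 by auto
  have AB1: "A1 * B1 = Phi1" by (simp only: A1_def B1_def Phi1_def pcompose_mult[symmetric] AB)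
  have dA1: "degree A1 = degree A" by (simp add: A1_def degree_pcompose)
  have dB1: "degree B1 = degree B" by (simp add: B1_def degree_pcompose)
  have A0: "A \<noteq> 0" and B0: "B \<noteq> 0" using dA dB by auto
  have sumdeg: "degree A + degree B = (p - 1) * q"
    using degree_mult_eq[OF A0 B0] AB degPhi by simp
  have lcAB: "lead_coeff A * lead_coeff B = 1"
    using lead_coeff_mult[of A B] AB degPhi lcPhi by simp
  have lcA1: "lead_coeff A1 = lead_coeff A"
    unfolding A1_def by (subst lead_coeff_comp) auto
  have lcB1: "lead_coeff B1 = lead_coeff B"
    unfolding B1_def by (subst lead_coeff_comp) auto
  have prI: "prime (int p)" using pr by simp
  have nd1: "\<not> int p dvd 1" using p2 by simp
  have ndA: "\<not> int p dvd lead_coeff A"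
    using lcAB nd1 by (metis dvd_mult2)
  have ndB: "\<not> int p dvd lead_coeff B"
    using lcAB nd1 by (metis dvd_mult)
  have cong: "int p dvd coeff Phi1 j" if "j \<noteq> (p - 1) * q" for j
    using Phi_pcompose_cong[OF pr M qd] that unfolding pdv_def Phi1_def
    by (metis coeff_diff coeff_monom diff_zero)
  have c0: "coeff Phi1 0 = int p"
    unfolding Phi1_def poly_0_coeff_0[symmetric] poly_pcompose Phi_def poly_sum
    by (simp add: poly_monom)
  define i0 where "i0 = (LEAST i. \<not> int p dvd coeff A1 i)"
  define j0 where "j0 = (LEAST i. \<not> int p dvd coeff B1 i)"
  have exA: "\<not> int p dvd coeff A1 (degree A1)" using ndA lcA1 by simp
  have exB: "\<not> int p dvd coeff B1 (degree B1)" using ndB lcB1 by simp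
  have i0: "\<not> int p dvd coeff A1 i0" unfolding i0_def by (rule LeastI[where P="\<lambda>i. \<not> int p dvd coeff A1 i", OF exA])
  have j0: "\<not> int p dvd coeff B1 j0" unfolding j0_def by (rule LeastI[where P="\<lambda>i. \<not> int p dvd coeff B1 i", OF exB])
  have i0le: "i0 \<le> degree A1" unfolding i0_def by (rule Least_le[where P="\<lambda>i. \<not> int p dvd coeff A1 i", OF exA])
  have j0le: "j0 \<le> degree B1" unfolding j0_def by (rule Least_le[where P="\<lambda>i. \<not> int p dvd coeff B1 i", OF exB])
  have bi0: "int p dvd coeff A1 i" if "i < i0" for i
    using not_less_Least[OF that[unfolded i0_def]] by simp
  have bj0: "int p dvd coeff B1 i" if "i < j0" for i
    using not_less_Least[OF that[unfolded j0_def]] by simp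
  have key: "\<not> int p dvd coeff Phi1 (i0 + j0)"
  proof
    assume h: "int p dvd coeff Phi1 (i0 + j0)"
    have "coeff Phi1 (i0 + j0) = (\<Sum>i\<le>i0 + j0. coeff A1 i * coeff B1 (i0 + j0 - i))"
      by (simp add: coeff_mult flip: AB1)
    also have "\<dots> = coeff A1 i0 * coeff B1 j0
        + (\<Sum>i\<in>{..i0 + j0} - {i0}. coeff A1 i * coeff B1 (i0 + j0 - i))"
      by (subst sum.remove[of _ i0]) auto
    finally have e: "coeff Phi1 (i0 + j0) = coeff A1 i0 * coeff B1 j0
        + (\<Sum>i\<in>{..i0 + j0} - {i0}. coeff A1 i * coeff B1 (i0 + j0 - i))" .
    have "int p dvd (\<Sum>i\<in>{..i0 + j0} - {i0}. coeff A1 i * coeff B1 (i0 + j0 - i))"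
    proof (rule dvd_sum)
      fix i assume "i \<in> {..i0 + j0} - {i0}"
      then have "i < i0 \<or> (i > i0 \<and> i0 + j0 - i < j0)" by auto
      then show "int p dvd coeff A1 i * coeff B1 (i0 + j0 - i)"
        using bi0 bj0 by (metis dvd_mult dvd_mult2)
    qed
    then have "int p dvd coeff A1 i0 * coeff B1 j0"
      using h e by (metis dvd_add_left_iff)
    then show False using i0 j0 prI by (simp add: prime_dvd_mult_iff)
  qed
  then have "i0 + j0 = (p - 1) * q" using cong by blast
  then have "i0 = degree A1" "j0 = degree B1" using i0le j0le dA1 dB1 sumdeg by linarith+
  then have "int p dvd coeff A1 0" "int p dvd coeff B1 0" using bi0 bj0 dA dB dA1 dB1 by auto
  then have "int p * int p dvd coeff Phi1 0"
    using AB1 coeff_mult_0[of A1 B1] by (simp add: mult_dvd_mono)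
  then have "int p dvd 1" using c0 p2 by (metis mult.right_neutral mult_cancel_left1 dvd_mult_cancel_left of_nat_eq_0_iff not_numeral_le_zero zero_neq_numeral le_0_eq)
  then show False using nd1 by simp
qed


definition ev :: "complex \<Rightarrow> int poly \<Rightarrow> complex" where
  "ev z f = poly (map_poly of_int f) z"

lemma map_poly_of_int_add:
  "map_poly (of_int :: int \<Rightarrow> 'a::comm_ring_1) (f + g) = map_poly of_int f + map_poly of_int g"
  by (rule poly_eqI) (simp add: coeff_map_poly)

lemma map_poly_of_int_mult:
  "map_poly (of_int :: int \<Rightarrow> 'a::comm_ring_1) (f * g) = map_poly of_int f * map_poly of_int g"
  by (rule poly_eqI) (simp add: coeff_map_poly coeff_mult of_int_sum)

lemma ev_add: "ev z (f + g) = ev z f + ev z g"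
  by (simp add: ev_def map_poly_of_int_add)
lemma ev_mult: "ev z (f * g) = ev z f * ev z g"
  by (simp add: ev_def map_poly_of_int_mult)
lemma ev_0[simp]: "ev z 0 = 0"
  by (simp add: ev_def)
lemma ev_smult: "ev z (smult c f) = of_int c * ev z f"
  by (simp add: ev_def map_poly_smult)
lemma ev_monom: "ev z (monom c n) = of_int c * z ^ n"
  by (simp add: ev_def map_poly_monom poly_monom)
lemma ev_pCons0: "ev z [:c:] = of_int c"
  by (simp add: ev_def map_poly_pCons)
lemma ev_sum: "ev z (sum f A) = (\<Sum>i\<in>A. ev z (f i))"
  by (induction A rule: infinite_finite_induct) (auto simp: ev_add)

lemma cis_eq_1_dvd:
  assumes "cis (2 * pi * (of_int a / of_nat b)) = 1" "b > 0"
  shows "int b dvd a"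
proof -
  have "cos (2 * pi * (of_int a / of_nat b)) = 1" using arg_cong[OF assms(1), of Re] by simp
  then obtain x :: int where x: "2 * pi * (of_int a / of_nat b) = of_int x * 2 * pi"
    using cos_one_2pi_int by blast
  have "of_int a / of_nat b = (2 * pi * (of_int a / of_nat b)) / (2 * pi)" by simp
  also have "\<dots> = of_int x * 2 * pi / (2 * pi)" by (simp only: x)
  also have "\<dots> = (of_int x :: real)" by simp
  finally have "of_int a / of_nat b = (of_int x :: real)" .
  then have "(of_int a :: real) = of_int x * of_nat b" using assms(2) by (simp add: divide_eq_eq)
  then have "a = x * int b" by (metis of_int_eq_iff of_int_mult of_int_of_nat_eq)
  then show ?thesis by simp
qed

lemma sgn_cancel: "c \<noteq> 0 \<Longrightarrow> c * x = \<bar>c\<bar> * y \<Longrightarrow> x = sgn c * (y::int)"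
proof (cases "c > 0")
  case True
  assume "c * x = \<bar>c\<bar> * y"
  then show ?thesis using True by simp
next
  case False
  assume "c \<noteq> 0" "c * x = \<bar>c\<bar> * y"
  then have "c < 0" using False by simp
  then have "c * x = c * (- y)" using \<open>c * x = \<bar>c\<bar> * y\<close> by simp
  then have "x = - y" using mult_left_cancel[of c x "- y"] \<open>c < 0\<close> by linarith
  then show ?thesis using \<open>c < 0\<close> by simp
qed

locale vl_ctx =
  fixes p M :: nat
  assumes pr: "prime p" and M1: "M \<ge> 1"
begin

definition "q = p ^ (M - 1)"
definition "zeta = cis (2 * pi / real (p ^ M))"

lemma p2: "p \<ge> 2" using pr prime_ge_2_nat by blast
lemma q0: "q > 0" using p2 by (simp add: q_def)
lemma P_eq: "p ^ M = q * p" using M1 unfolding q_def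
  by (metis Suc_diff_le diff_Suc_1 power_Suc2)
lemma P_eq2: "p ^ M = (p - 1) * q + q" using P_eq p2
  by (metis add.commute mult.commute mult_eq_if nat_neq_iff not_numeral_le_zero)

lemma ev_Phi: "ev zeta (Phi p q) = 0"
proof -
  define w where "w = cis (2 * pi / real p)"
  have "zeta ^ q = cis (real q * (2 * pi / real (p ^ M)))" unfolding zeta_def by (rule Complex.DeMoivre)
  moreover have "real q * (2 * pi / real (p ^ M)) = 2 * pi / real p"
    using q0 p2 by (simp add: P_eq field_simps)
  ultimately have zq: "zeta ^ q = w" unfolding w_def by simp
  have "ev zeta (Phi p q) = (\<Sum>k<p. w ^ k)"
    unfolding Phi_def ev_sum ev_monom by (simp add: power_mult[symmetric] zq[symmetric] mult.commute)
  moreover have "w ^ p = 1" unfolding w_def Complex.DeMoivre using p2 by simp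
  moreover have "w \<noteq> 1"
  proof
    assume "w = 1"
    then have "cis (2 * pi * (of_int 1 / of_nat p)) = 1" unfolding w_def by simp
    then have "int p dvd 1" using p2 by (intro cis_eq_1_dvd) auto
    then show False using p2 by simp
  qed
  ultimately show ?thesis using power_diff_1_eq[of w p] by simp
qed

lemma irred:
  assumes R: "R \<noteq> 0" "ev zeta R = 0"
  shows "(p - 1) * q \<le> degree R"
proof (rule ccontr)
  assume "\<not> (p - 1) * q \<le> degree R"
  then have dR: "degree R < (p - 1) * q" by simp
  define d0 where "d0 = (LEAST d. \<exists>R. R \<noteq> 0 \<and> ev zeta R = 0 \<and> degree R = d)"
  have ex: "\<exists>R'. R' \<noteq> 0 \<and> ev zeta R' = 0 \<and> degree R' = degree R" using R by blast
  obtain R0 where R0: "R0 \<noteq> 0" "ev zeta R0 = 0" "degree R0 = d0"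
    using LeastI_ex[of "\<lambda>d. \<exists>R. R \<noteq> 0 \<and> ev zeta R = 0 \<and> degree R = d"] ex
    unfolding d0_def by blast
  have d0le: "d0 \<le> degree R" unfolding d0_def by (rule Least_le) (use ex in blast)
  have minimal: "d0 \<le> degree T" if "T \<noteq> 0" "ev zeta T = 0" for T
    unfolding d0_def by (rule Least_le) (use that in blast)
  obtain Qq T where pd: "pseudo_divmod (Phi p q) R0 = (Qq, T)" by (cases "pseudo_divmod (Phi p q) R0") auto
  define c where "c = lead_coeff R0 ^ (Suc (degree (Phi p q)) - degree R0)"
  have eq: "smult c (Phi p q) = R0 * Qq + T" and T: "T = 0 \<or> degree T < degree R0"
    using pseudo_divmod[OF R0(1) pd] unfolding c_def by auto
  have "ev zeta T = 0" using arg_cong[OF eq, of "ev zeta"] by (simp add: ev_smult ev_Phi ev_add ev_mult R0)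
  then have T0: "T = 0" using T minimal R0(3) by fastforce
  have c0: "c \<noteq> 0" unfolding c_def using R0(1) by simp
  have eq2: "smult c (Phi p q) = R0 * Qq" using eq T0 by simp
  have degPhi: "degree (Phi p q) = (p - 1) * q" and lcPhi: "coeff (Phi p q) ((p - 1) * q) = 1"
    using degree_Phi[OF q0] p2 by auto
  have cPhi: "content (Phi p q) = 1"
  proof -
    have "content (Phi p q) dvd 1" using content_dvd_coeff[of "Phi p q" "(p - 1) * q"] lcPhi by metis
    then have "\<bar>content (Phi p q)\<bar> = 1" by simp
    moreover have "\<bar>content (Phi p q)\<bar> = content (Phi p q)" using normalize_content[of "Phi p q"] by simp
    ultimately show ?thesis by simp
  qed
  define H where "H = primitive_part R0 * primitive_part Qq"
  have "R0 * Qq = smult (content R0 * content Qq) H"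
    unfolding H_def by (metis content_times_primitive_part mult_smult_left mult_smult_right smult_smult)
  moreover have "content R0 * content Qq = \<bar>c\<bar>"
    using arg_cong[OF eq2, of content] by (simp add: content_smult cPhi content_mult)
  ultimately have eq3: "smult c (Phi p q) = smult \<bar>c\<bar> H" using eq2 by simp
  define A where "A = smult (sgn c) (primitive_part R0)"
  define B where "B = primitive_part Qq"
  have AB: "A * B = Phi p q"
  proof (rule poly_eqI)
    fix i
    have ci: "c * coeff (Phi p q) i = \<bar>c\<bar> * coeff H i"
      using arg_cong[OF eq3, of "\<lambda>f. coeff f i"] by simp
    have "coeff (Phi p q) i = sgn c * coeff H i"
      using ci c0 by (rule sgn_cancel[rotated])
    then show "coeff (A * B) i = coeff (Phi p q) i"
      unfolding A_def B_def H_def by simp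
  qed
  have dR0: "degree R0 \<ge> 1"
  proof (rule ccontr)
    assume "\<not> degree R0 \<ge> 1"
    then have "degree R0 = 0" by simp
    then have "R0 = [:coeff R0 0:]" by (metis degree_0_id)
    then have "ev zeta R0 = of_int (coeff R0 0)" by (metis ev_pCons0)
    moreover have "coeff R0 0 \<noteq> 0" using R0(1) \<open>R0 = [:coeff R0 0:]\<close> by (metis pCons_0_0)
    ultimately show False using R0(2) by simp
  qed
  have dA: "degree A = degree R0" unfolding A_def using c0 by (simp add: degree_primitive_part sgn_0_0)
  have A0: "A \<noteq> 0" using dA dR0 by auto
  have B0: "B \<noteq> 0" using AB A0 degPhi p2 q0 by auto
  have "degree A + degree B = (p - 1) * q" using degree_mult_eq[OF A0 B0] AB degPhi by simp
  then have dB: "degree B \<ge> 1" using dA R0(3) d0le dR by linarith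
  show False using no_factor[OF pr M1 q_def AB] dA dR0 dB by simp
qed

lemma vanishing:
  fixes n :: "nat \<Rightarrow> int"
  assumes S: "(\<Sum>r<p ^ M. of_int (n r) * zeta ^ r) = 0"
    and r: "r + q < p ^ M"
  shows "n r = n (r + q)"
proof -
  define P where "P = p ^ M"
  define R where "R = (\<Sum>r<P. monom (n r) r)"
  have cR: "coeff R j = (if j < P then n j else 0)" for j
    unfolding R_def coeff_sum coeff_monom by (simp add: sum.delta' if_distrib)
  have evR: "ev zeta R = 0" unfolding R_def ev_sum ev_monom using S by (simp add: P_def)
  have degPhi: "degree (Phi p q) = (p - 1) * q" and lcPhi: "coeff (Phi p q) ((p - 1) * q) = 1"
    using degree_Phi[OF q0] p2 by auto
  have Phi0: "Phi p q \<noteq> 0" using lcPhi by auto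
  obtain Qq T where pd: "pseudo_divmod R (Phi p q) = (Qq, T)" by (cases "pseudo_divmod R (Phi p q)") auto
  have eq: "R = Phi p q * Qq + T" and T: "T = 0 \<or> degree T < degree (Phi p q)"
    using pseudo_divmod[OF Phi0 pd] degPhi lcPhi by auto
  have "ev zeta T = 0" using arg_cong[OF eq, of "ev zeta"] by (simp add: ev_Phi ev_add ev_mult evR)
  then have T0: "T = 0" using T irred degPhi by fastforce
  have eq2: "R = Phi p q * Qq" using eq T0 by simp
  have dR: "degree R \<le> P - 1"
    by (rule degree_le) (auto simp: cR)
  have cQ: "coeff Qq i = 0" if "i \<ge> q" for i
  proof (cases "Qq = 0")
    case False
    have "degree R = (p - 1) * q + degree Qq" using eq2 degree_mult_eq[OF Phi0 False] degPhi by simp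
    then have "degree Qq < q" using dR P_eq2 q0 unfolding P_def by linarith
    then show ?thesis using that by (simp add: coeff_eq_0)
  qed simp
  have cprod: "coeff (Phi p q * Qq) j = coeff Qq (j mod q)" if j: "j < P" for j
  proof -
    define k0 where "k0 = j div q"
    have k0p: "k0 < p" using j unfolding k0_def P_def P_eq using q0
      by (simp add: div_less_iff_less_mult mult.commute)
    have rest: "(\<Sum>k\<in>{..<p} - {k0}. if j < k * q then 0 else coeff Qq (j - k * q)) = 0"
    proof (rule sum.neutral, intro ballI)
      fix k assume k: "k \<in> {..<p} - {k0}"
      have jd: "j = k0 * q + j mod q" unfolding k0_def by (metis div_mult_mod_eq)
      have jm: "j mod q < q" using q0 by simp
      show "(if j < k * q then 0 else coeff Qq (j - k * q)) = 0"
      proof (cases "k < k0")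
        case True
        then have "(k + 1) * q \<le> k0 * q" by (intro mult_right_mono) auto
        then have "q \<le> j - k * q" using jd by (simp add: algebra_simps)
        then show ?thesis using cQ by auto
      next
        case False
        then have "k0 + 1 \<le> k" using k by auto
        then have "(k0 + 1) * q \<le> k * q" by (intro mult_right_mono) auto
        then have "j < k * q" using jd jm by (simp add: algebra_simps)
        then show ?thesis by simp
      qed
    qed
    have t0: "(if j < k0 * q then 0 else coeff Qq (j - k0 * q)) = coeff Qq (j mod q)"
    proof -
      have "k0 * q \<le> j" unfolding k0_def by (metis div_times_less_eq_dividend)
      moreover have "j - k0 * q = j mod q" unfolding k0_def by (simp add: minus_div_mult_eq_mod)
      ultimately show ?thesis by simp
    qed
    have "Phi p q * Qq = (\<Sum>k<p. monom 1 (k * q) * Qq)" by (simp add: Phi_def sum_distrib_right)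
    then have "coeff (Phi p q * Qq) j = (\<Sum>k<p. coeff (monom 1 (k * q) * Qq) j)" by (simp add: coeff_sum)
    also have "\<dots> = (\<Sum>k<p. if j < k * q then 0 else coeff Qq (j - k * q))"
      by (rule sum.cong) (simp_all add: coeff_monom_mult)
    also have "\<dots> = (if j < k0 * q then 0 else coeff Qq (j - k0 * q))
        + (\<Sum>k\<in>{..<p} - {k0}. if j < k * q then 0 else coeff Qq (j - k * q))"
      using k0p by (subst sum.remove[of _ k0]) auto
    also have "\<dots> = coeff Qq (j mod q)" using rest t0 by simp
    finally show ?thesis .
  qed
  have "n r = coeff R r" using r by (simp add: cR P_def)
  also have "\<dots> = coeff Qq (r mod q)" using eq2 cprod r by (simp add: P_def)
  also have "\<dots> = coeff Qq ((r + q) mod q)" by simp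
  also have "\<dots> = coeff R (r + q)" using eq2 cprod r by (simp add: P_def)
  also have "\<dots> = n (r + q)" using r by (simp add: cR P_def)
  finally show ?thesis .
qed

end



definition lowb :: "(int \<Rightarrow> nat) \<Rightarrow> int \<Rightarrow> bool" where
  "lowb x B \<longleftrightarrow> (\<forall>n<B. x n = 0)"

definition Sn :: "nat \<Rightarrow> int \<Rightarrow> (int \<Rightarrow> nat) \<Rightarrow> nat \<Rightarrow> int" where
  "Sn p B x L = (\<Sum>i<L. int (x (B + int i)) * int p ^ i)"

lemma Sn_0[simp]: "Sn p B x 0 = 0" by (simp add: Sn_def)
lemma Sn_Suc: "Sn p B x (Suc L) = Sn p B x L + int (x (B + int L)) * int p ^ L"
  by (simp add: Sn_def)

lemma Sn_add: "Sn p B x (L + L') = Sn p B x L + int p ^ L * Sn p (B + int L) x L'"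
proof (induction L')
  case (Suc L')
  show ?case using Suc by (simp add: Sn_Suc algebra_simps power_add)
qed simp

lemma Sn_nonneg: "0 \<le> Sn p B x L"
  unfolding Sn_def by (intro sum_nonneg) simp

lemma Sn_less:
  assumes "\<forall>n. x n < p"
  shows "Sn p B x L < int p ^ L"
proof (induction L)
  case 0 then show ?case by simp
next
  case (Suc L)
  have "x (B + int L) < p" using assms by simp
  then have "int (x (B + int L)) \<le> int p - 1" by linarith
  then have "int (x (B + int L)) * int p ^ L \<le> (int p - 1) * int p ^ L"
    by (intro mult_right_mono) auto
  then show ?case using Suc by (simp add: Sn_Suc algebra_simps)
qed

lemma Sn_dvd:
  assumes "L \<le> L'"
  shows "int p ^ L dvd Sn p B x L' - Sn p B x L"
proof -
  have "L' = L + (L' - L)" using assms by simp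
  then have "Sn p B x L' = Sn p B x L + int p ^ L * Sn p (B + int L) x (L' - L)"
    by (metis Sn_add)
  then show ?thesis by simp
qed

lemma Sn_cong:
  assumes "\<And>i. i < L \<Longrightarrow> x (B + int i) = y (B + int i)"
  shows "Sn p B x L = Sn p B y L"
  unfolding Sn_def using assms by (intro sum.cong) auto

lemma Sn_zero_digits:
  assumes "Sn p B x L = 0" "p > 0" "i < L"
  shows "x (B + int i) = 0"
proof -
  have "(\<Sum>i<L. int (x (B + int i)) * int p ^ i) = 0" using assms(1) by (simp add: Sn_def)
  then have "\<forall>i\<in>{..<L}. int (x (B + int i)) * int p ^ i = 0"
    by (subst sum_nonneg_eq_0_iff[symmetric]) auto
  then show ?thesis using assms(2,3) by simp
qed

lemma powi_split:
  assumes "p > 0" "j \<ge> 0"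
  shows "real p powi (B + j) = real p ^ nat j * real p powi B"
proof -
  have "real p powi (B + j) = real p powi j * real p powi B"
    using assms by (simp add: power_int_add)
  moreover have "real p powi j = real p ^ nat j"
    using assms(2) by (metis int_nat_eq power_int_of_nat)
  ultimately show ?thesis by simp
qed

lemma ptrunc_Sn:
  assumes "lowb x B" "p > 0"
  shows "ptrunc p x K = of_int (Sn p B x (nat (K - B))) * real p powi B"
proof -
  define L where "L = nat (K - B)"
  have sub: "{n. n < K \<and> x n \<noteq> 0} \<subseteq> {B..<K}"
    using assms(1) unfolding lowb_def by (auto simp: not_less[symmetric])
  have "ptrunc p x K = (\<Sum>n\<in>{B..<K}. real (x n) * real p powi n)"
    unfolding ptrunc_def by (rule sum.mono_neutral_left) (use sub in auto)
  also have "{B..<K} = (\<lambda>i. B + int i) ` {..<L}"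
  proof (rule set_eqI, rule iffI)
    fix n assume "n \<in> {B..<K}"
    then show "n \<in> (\<lambda>i. B + int i) ` {..<L}"
      unfolding L_def by (intro image_eqI[where x = "nat (n - B)"]) auto
  qed (auto simp: L_def)
  also have "(\<Sum>n\<in>(\<lambda>i. B + int i) ` {..<L}. real (x n) * real p powi n)
      = (\<Sum>i<L. real (x (B + int i)) * real p powi (B + int i))"
    by (subst sum.reindex) (auto simp: inj_on_def)
  also have "\<dots> = (\<Sum>i<L. real (x (B + int i)) * real p ^ i) * real p powi B"
    unfolding sum_distrib_right using assms(2)
    by (intro sum.cong) (simp_all add: powi_split)
  also have "(\<Sum>i<L. real (x (B + int i)) * real p ^ i) = of_int (Sn p B x L)"
    unfolding Sn_def by simp
  finally show ?thesis unfolding L_def .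
qed

lemma pcong_scaled:
  assumes "p > 0" "int p ^ nat (k - B) dvd (a - b)"
  shows "pcong p k (of_int a * real p powi B) (of_int b * real p powi B)"
proof -
  obtain t where t: "a - b = int p ^ nat (k - B) * t" using assms(2) by blast
  show ?thesis
  proof (cases "B \<le> k")
    case True
    have "real p powi k = real p ^ nat (k - B) * real p powi B"
      using powi_split[OF assms(1), of "k - B" B] True by simp
    then have "of_int a * real p powi B - of_int b * real p powi B = of_int t * real p powi k"
      using arg_cong[OF t, of real_of_int] by (simp add: algebra_simps)
    then show ?thesis unfolding pcong_def by blast
  next
    case False
    then have t': "a - b = t" using t by simp
    have "real p powi B = real p ^ nat (B - k) * real p powi k"
      using powi_split[OF assms(1), of "B - k" k] False by simp
    then have "of_int a * real p powi B - of_int b * real p powi B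
        = of_int (t * int p ^ nat (B - k)) * real p powi k"
      using arg_cong[OF t', of real_of_int] by (simp add: algebra_simps)
    then show ?thesis unfolding pcong_def by blast
  qed
qed

lemma pcong_scaled_rev:
  assumes "p > 0" "B \<le> k" "pcong p k (of_int a * real p powi B) (of_int b * real p powi B)"
  shows "int p ^ nat (k - B) dvd (a - b)"
proof -
  obtain m :: int where m: "of_int a * real p powi B - of_int b * real p powi B = of_int m * real p powi k"
    using assms(3) unfolding pcong_def by blast
  have "real p powi k = real p ^ nat (k - B) * real p powi B"
    using powi_split[OF assms(1), of "k - B" B] assms(2) by simp
  then have "(of_int (a - b) - of_int m * real p ^ nat (k - B)) * real p powi B = 0"
    using m by (simp add: algebra_simps)
  moreover have "real p powi B \<noteq> 0" using assms(1) by simp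
  ultimately have "of_int (a - b) - of_int m * real p ^ nat (k - B) = 0" by (simp only: mult_eq_0_iff) simp
  then have "of_int (a - b) = (of_int (m * int p ^ nat (k - B)) :: real)" by simp
  then have "a - b = m * int p ^ nat (k - B)" by (simp only: of_int_eq_iff)
  then show ?thesis by simp
qed

lemma pcong_trans: "pcong p k a b \<Longrightarrow> pcong p k b c \<Longrightarrow> pcong p k a c"
  unfolding pcong_def
proof -
  assume "\<exists>m::int. a - b = of_int m * real p powi k" "\<exists>m::int. b - c = of_int m * real p powi k"
  then obtain m1 m2 :: int where "a - b = of_int m1 * real p powi k" "b - c = of_int m2 * real p powi k" by blast
  then have "a - c = of_int (m1 + m2) * real p powi k" by (simp add: algebra_simps)
  then show "\<exists>m::int. a - c = of_int m * real p powi k" by blast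
qed

lemma pcong_sym: "pcong p k a b \<Longrightarrow> pcong p k b a"
  unfolding pcong_def
proof -
  assume "\<exists>m::int. a - b = of_int m * real p powi k"
  then obtain m :: int where "a - b = of_int m * real p powi k" by blast
  then have "b - a = of_int (- m) * real p powi k" by (simp add: algebra_simps)
  then show "\<exists>m::int. b - a = of_int m * real p powi k" by blast
qed


lemma dvd_diff_ex:
  fixes a b k :: int
  assumes "k dvd a - b"
  shows "\<exists>t. a = b + k * t"
proof -
  obtain t where "a - b = k * t" using assms by (rule dvdE)
  then have "a = b + k * t" by simp
  then show ?thesis by blast
qed

lemma digit_cong:
  fixes m m' :: int
  assumes "p > 0" "int p ^ Suc i dvd (m' - m)"
  shows "(m div int p ^ i) mod int p = (m' div int p ^ i) mod int p"
proof -
  obtain t where t: "m' - m = int p ^ Suc i * t" using assms(2) by blast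
  then have "m' = m + int p ^ i * (int p * t)" by (simp add: algebra_simps)
  then have "m' div int p ^ i = m div int p ^ i + int p * t"
    using assms(1) by simp
  then show ?thesis by simp
qed

lemma digits_sum:
  fixes m :: int
  assumes "p > 0"
  shows "(\<Sum>i<L. ((m div int p ^ i) mod int p) * int p ^ i) = m mod int p ^ L"
proof (induction L)
  case 0 then show ?case by simp
next
  case (Suc L)
  have "m mod int p ^ Suc L = m mod (int p ^ L * int p)" by (simp add: mult.commute)
  also have "\<dots> = int p ^ L * (m div int p ^ L mod int p) + m mod int p ^ L"
    using mod_mult2_eq'[of m "p ^ L" p] by simp
  finally show ?case using Suc by (simp add: algebra_simps)
qed

lemma GE:
  fixes A :: "nat \<Rightarrow> int"
  assumes p: "p > 0" and A: "\<And>L L'. L \<le> L' \<Longrightarrow> int p ^ L dvd A L' - A L"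
  shows "\<exists>z. (\<forall>n. z n < p) \<and> lowb z B \<and> (\<forall>L. int p ^ L dvd Sn p B z L - A L)"
proof -
  define z where "z n = (if n < B then 0 else nat ((A (Suc (nat (n - B))) div int p ^ nat (n - B)) mod int p))" for n
  have zd: "\<forall>n. z n < p"
  proof
    fix n
    have "(A (Suc (nat (n - B))) div int p ^ nat (n - B)) mod int p < int p" using p by simp
    then show "z n < p" unfolding z_def using p by (auto simp: nat_less_iff)
  qed
  have zl: "lowb z B" unfolding lowb_def z_def by simp
  have "int p ^ L dvd Sn p B z L - A L" for L
  proof -
    have "Sn p B z L = (\<Sum>i<L. ((A L div int p ^ i) mod int p) * int p ^ i)"
      unfolding Sn_def
    proof (intro sum.cong refl)
      fix i assume i: "i \<in> {..<L}"
      have "int (z (B + int i)) = (A (Suc i) div int p ^ i) mod int p"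
        unfolding z_def using p by simp
      also have "\<dots> = (A L div int p ^ i) mod int p"
        using i by (intro digit_cong[OF p] A) auto
      finally show "int (z (B + int i)) * int p ^ i = (A L div int p ^ i) mod int p * int p ^ i" by simp
    qed
    also have "\<dots> = A L mod int p ^ L" by (rule digits_sum[OF p])
    finally have "Sn p B z L - A L = - (int p ^ L * (A L div int p ^ L))"
      by (simp add: minus_div_mult_eq_mod[symmetric] algebra_simps)
    then show ?thesis by simp
  qed
  then show ?thesis using zd zl by blast
qed

lemma bounded_dvd_eq:
  fixes a b P :: int
  assumes "0 \<le> a" "a < P" "0 \<le> b" "b < P" "P dvd a - b"
  shows "a = b"
proof -
  obtain t where t: "a - b = P * t" using assms(5) by blast
  have P0: "P > 0" using assms by linarith
  have "\<not> t \<ge> 1"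
  proof
    assume "t \<ge> 1"
    then have "P * 1 \<le> P * t" using P0 by (intro mult_left_mono) auto
    then show False using t assms by linarith
  qed
  moreover have "\<not> t \<le> -1"
  proof
    assume "t \<le> -1"
    then have "P * t \<le> P * (-1)" using P0 by (intro mult_left_mono) auto
    then show False using t assms by linarith
  qed
  ultimately have "t = 0" by simp
  then show ?thesis using t by simp
qed

lemma unique_digits:
  assumes p: "p > 0" and zd: "\<forall>n. z n < p" and zd': "\<forall>n. z' n < p"
    and zl: "lowb z B" and zl': "lowb z' B"
    and dv: "\<And>L. int p ^ L dvd Sn p B z L - Sn p B z' L"
  shows "z = z'"
proof -
  have eqS: "Sn p B z L = Sn p B z' L" for L
    using bounded_dvd_eq[OF Sn_nonneg Sn_less[OF zd] Sn_nonneg Sn_less[OF zd'] dv] .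
  have "z (B + int L) = z' (B + int L)" for L
    using eqS[of "Suc L"] eqS[of L] p by (simp add: Sn_Suc)
  show ?thesis
  proof
    fix n
    show "z n = z' n"
    proof (cases "n < B")
      case True then show ?thesis using zl zl' by (simp add: lowb_def)
    next
      case False
      then have "n = B + int (nat (n - B))" by simp
      then show ?thesis using \<open>\<And>L. z (B + int L) = z' (B + int L)\<close> by metis
    qed
  qed
qed

lemma Qp_digit: "x \<in> Qp p \<Longrightarrow> x n < p"
  by (simp add: Qp_def)

lemma Qp_lowb: "x \<in> Qp p \<Longrightarrow> \<exists>N. \<forall>B\<le>N. lowb x B"
proof -
  assume "x \<in> Qp p"
  then obtain N where N: "\<forall>n<N. x n = 0" unfolding Qp_def by blast
  then have "\<forall>B\<le>N. lowb x B" unfolding lowb_def by auto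
  then show ?thesis by blast
qed

lemma finite_lowb:
  assumes "finite A" "A \<subseteq> Qp p"
  shows "\<exists>B\<le>B0. \<forall>x\<in>A. lowb x B"
  using assms
proof (induction A arbitrary: B0 rule: finite_induct)
  case empty then show ?case by auto
next
  case (insert a A)
  obtain N where N: "\<forall>B\<le>N. lowb a B" using Qp_lowb[of a p] insert by auto
  obtain B where B: "B \<le> min B0 N" "\<forall>x\<in>A. lowb x B" using insert by (meson insert_subset)
  then show ?case using N by auto
qed

lemma lowb_Qp: "(\<forall>n. x n < p) \<Longrightarrow> lowb x B \<Longrightarrow> x \<in> Qp p"
  unfolding Qp_def lowb_def by auto

lemma Qp_unique:
  assumes p: "p > 0" and z: "z \<in> Qp p" "z' \<in> Qp p"
    and c: "\<And>k. pcong p k (ptrunc p z k) (ptrunc p z' k)"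
  shows "z = z'"
proof -
  obtain B where B: "\<forall>x\<in>{z, z'}. lowb x B" using finite_lowb[of "{z, z'}" p 0] z by auto
  show ?thesis
  proof (rule unique_digits[OF p _ _ _ _])
    show "\<forall>n. z n < p" "\<forall>n. z' n < p" using z by (auto simp: Qp_digit)
    show "lowb z B" "lowb z' B" using B by auto
    fix L
    have "pcong p (B + int L) (of_int (Sn p B z L) * real p powi B) (of_int (Sn p B z' L) * real p powi B)"
      using c[of "B + int L"] ptrunc_Sn[of z B p] ptrunc_Sn[of z' B p] B p by simp
    then show "int p ^ L dvd Sn p B z L - Sn p B z' L"
      using pcong_scaled_rev[OF p, of B "B + int L"] by simp
  qed
qed

definition psub_spec :: "nat \<Rightarrow> (int \<Rightarrow> nat) \<Rightarrow> (int \<Rightarrow> nat) \<Rightarrow> (int \<Rightarrow> nat) \<Rightarrow> bool" where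
  "psub_spec p x y z \<longleftrightarrow> z \<in> Qp p \<and> (\<forall>k. pcong p k (ptrunc p z k) (ptrunc p x k - ptrunc p y k))"

lemma psub_ex:
  assumes p: "p > 0" and xy: "x \<in> Qp p" "y \<in> Qp p"
  shows "\<exists>!z. psub_spec p x y z"
proof -
  obtain B where B: "\<forall>w\<in>{x, y}. lowb w B" using finite_lowb[of "{x, y}" p 0] xy by auto
  define A where "A L = Sn p B x L - Sn p B y L" for L
  have A: "int p ^ L dvd A L' - A L" if "L \<le> L'" for L L'
  proof -
    have "A L' - A L = (Sn p B x L' - Sn p B x L) - (Sn p B y L' - Sn p B y L)"
      unfolding A_def by simp
    then show ?thesis using Sn_dvd[OF that] by (metis dvd_diff)
  qed
  obtain z where z: "\<forall>n. z n < p" "lowb z B" "\<forall>L. int p ^ L dvd Sn p B z L - A L"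
    using GE[OF p A] by blast
  have zQ: "z \<in> Qp p" using z lowb_Qp by blast
  have "psub_spec p x y z"
    unfolding psub_spec_def
  proof (intro conjI allI zQ)
    fix k
    have "ptrunc p x k - ptrunc p y k = of_int (A (nat (k - B))) * real p powi B"
      using ptrunc_Sn[of x B p k] ptrunc_Sn[of y B p k] B p by (simp add: A_def algebra_simps)
    moreover have "ptrunc p z k = of_int (Sn p B z (nat (k - B))) * real p powi B"
      using ptrunc_Sn[of z B p k] z p by simp
    ultimately show "pcong p k (ptrunc p z k) (ptrunc p x k - ptrunc p y k)"
      using pcong_scaled[OF p, of k B] z(3) by simp
  qed
  moreover have "w = z" if "psub_spec p x y w" for w
  proof (rule Qp_unique[OF p])
    show "w \<in> Qp p" "z \<in> Qp p" using that zQ by (auto simp: psub_spec_def)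
    fix k
    show "pcong p k (ptrunc p w k) (ptrunc p z k)"
      using that \<open>psub_spec p x y z\<close> unfolding psub_spec_def by (meson pcong_sym pcong_trans)
  qed
  ultimately show ?thesis by blast
qed

lemma psub_spec_holds:
  assumes "p > 0" "x \<in> Qp p" "y \<in> Qp p"
  shows "psub_spec p x y (psub p x y)"
proof -
  have "psub p x y = (THE z. psub_spec p x y z)"
    unfolding psub_def psub_spec_def by simp
  then show ?thesis using theI'[OF psub_ex[OF assms]] by simp
qed

definition pmul_spec :: "nat \<Rightarrow> (int \<Rightarrow> nat) \<Rightarrow> (int \<Rightarrow> nat) \<Rightarrow> (int \<Rightarrow> nat) \<Rightarrow> bool" where
  "pmul_spec p x y z \<longleftrightarrow> z \<in> Qp p \<and>
      (\<forall>k. \<exists>K. \<forall>K'\<ge>K. pcong p k (ptrunc p z k) (ptrunc p x K' * ptrunc p y K'))"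

lemma pmul_ex:
  assumes p: "p > 0" and xy: "x \<in> Qp p" "y \<in> Qp p"
  shows "\<exists>!z. pmul_spec p x y z"
proof -
  obtain B where B: "\<forall>w\<in>{x, y}. lowb w B" using finite_lowb[of "{x, y}" p 0] xy by auto
  define A where "A L = Sn p B x L * Sn p B y L" for L
  have A: "int p ^ L dvd A L' - A L" if LL: "L \<le> L'" for L L'
  proof -
    obtain a where a: "Sn p B x L' = Sn p B x L + int p ^ L * a" using Sn_dvd[OF LL, of p B x]
      using dvd_diff_ex by blast
    obtain b where b: "Sn p B y L' = Sn p B y L + int p ^ L * b" using Sn_dvd[OF LL, of p B y]
      using dvd_diff_ex by blast
    have "A L' - A L = int p ^ L * (a * Sn p B y L + Sn p B x L * b + int p ^ L * a * b)"
      unfolding A_def a b by (simp add: algebra_simps)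
    then show ?thesis by simp
  qed
  obtain z where z: "\<forall>n. z n < p" "lowb z (B + B)" "\<forall>L. int p ^ L dvd Sn p (B + B) z L - A L"
    using GE[OF p A] by blast
  have zQ: "z \<in> Qp p" using z lowb_Qp by blast
  have pp: "real p powi B * real p powi B = real p powi (B + B)"
    using p power_int_add[of "real p" B B] by simp
  have "pmul_spec p x y z"
    unfolding pmul_spec_def
  proof (intro conjI allI zQ)
    fix k
    define L where "L = nat (k - (B + B))"
    show "\<exists>K. \<forall>K'\<ge>K. pcong p k (ptrunc p z k) (ptrunc p x K' * ptrunc p y K')"
    proof (intro exI allI impI)
      fix K' assume K': "B + int L \<le> K'"
      define L' where "L' = nat (K' - B)"
      have LL: "L \<le> L'" using K' unfolding L'_def by simp
      have "ptrunc p x K' * ptrunc p y K' = of_int (A L') * real p powi (B + B)"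
        using ptrunc_Sn[of x B p K'] ptrunc_Sn[of y B p K'] B p pp
        by (simp add: A_def L'_def algebra_simps)
      moreover have "ptrunc p z k = of_int (Sn p (B + B) z L) * real p powi (B + B)"
        using ptrunc_Sn[of z "B + B" p k] z p by (simp add: L_def)
      moreover have "int p ^ nat (k - (B + B)) dvd Sn p (B + B) z L - A L'"
      proof -
        have "Sn p (B + B) z L - A L' = (Sn p (B + B) z L - A L) - (A L' - A L)" by simp
        then show ?thesis using z(3) A[OF LL] unfolding L_def by (metis dvd_diff)
      qed
      ultimately show "pcong p k (ptrunc p z k) (ptrunc p x K' * ptrunc p y K')"
        using pcong_scaled[OF p, of k "B + B"] by simp
    qed
  qed
  moreover have "w = z" if W: "pmul_spec p x y w" for w
  proof (rule Qp_unique[OF p])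
    show "w \<in> Qp p" "z \<in> Qp p" using that zQ by (auto simp: pmul_spec_def)
    fix k
    obtain K1 where K1: "\<forall>K'\<ge>K1. pcong p k (ptrunc p w k) (ptrunc p x K' * ptrunc p y K')"
      using W unfolding pmul_spec_def by blast
    obtain K2 where K2: "\<forall>K'\<ge>K2. pcong p k (ptrunc p z k) (ptrunc p x K' * ptrunc p y K')"
      using \<open>pmul_spec p x y z\<close> unfolding pmul_spec_def by blast
    show "pcong p k (ptrunc p w k) (ptrunc p z k)"
      using K1[rule_format, of "max K1 K2"] K2[rule_format, of "max K1 K2"]
      by (meson max.cobounded1 max.cobounded2 pcong_sym pcong_trans)
  qed
  ultimately show ?thesis by blast
qed

lemma pmul_spec_holds:
  assumes "p > 0" "x \<in> Qp p" "y \<in> Qp p"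
  shows "pmul_spec p x y (pmul p x y)"
proof -
  have "pmul p x y = (THE z. pmul_spec p x y z)"
    unfolding pmul_def pmul_spec_def by simp
  then show ?thesis using theI'[OF pmul_ex[OF assms]] by simp
qed


definition fdiff :: "(int \<Rightarrow> nat) \<Rightarrow> (int \<Rightarrow> nat) \<Rightarrow> int" where
  "fdiff x y = (THE n. x n \<noteq> y n \<and> (\<forall>m<n. x m = y m))"

lemma fdiff_unique:
  assumes "x n \<noteq> y n" "\<forall>m<n. x m = y m"
  shows "fdiff x y = n"
  unfolding fdiff_def
proof (rule the_equality)
  show "x n \<noteq> y n \<and> (\<forall>m<n. x m = y m)" using assms by blast
  fix n' assume n': "x n' \<noteq> y n' \<and> (\<forall>m<n'. x m = y m)"
  show "n' = n"
  proof (rule ccontr)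
    assume "n' \<noteq> n"
    then have "n' < n \<or> n < n'" by linarith
    then show False using n' assms by blast
  qed
qed

lemma fdiff_props:
  assumes "lowb x B" "lowb y B" "x \<noteq> y"
  shows "B \<le> fdiff x y \<and> x (fdiff x y) \<noteq> y (fdiff x y) \<and> (\<forall>m<fdiff x y. x m = y m)"
proof -
  obtain n where n: "x n \<noteq> y n" using assms(3) by blast
  have nB: "B \<le> n" using n assms(1,2) unfolding lowb_def by (cases "n < B") auto
  define k where "k = (LEAST k::nat. x (B + int k) \<noteq> y (B + int k))"
  have ex: "x (B + int (nat (n - B))) \<noteq> y (B + int (nat (n - B)))" using n nB by simp
  have k: "x (B + int k) \<noteq> y (B + int k)"
    unfolding k_def by (rule LeastI[where P = "\<lambda>k. x (B + int k) \<noteq> y (B + int k)", OF ex])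
  have below: "\<forall>m<B + int k. x m = y m"
  proof (intro allI impI)
    fix m assume m: "m < B + int k"
    show "x m = y m"
    proof (cases "m < B")
      case True then show ?thesis using assms(1,2) by (simp add: lowb_def)
    next
      case False
      then have "nat (m - B) < k" using m by simp
      then have "x (B + int (nat (m - B))) = y (B + int (nat (m - B)))"
        using not_less_Least[of "nat (m - B)" "\<lambda>k. x (B + int k) \<noteq> y (B + int k)"] unfolding k_def by blast
      then show ?thesis using False by simp
    qed
  qed
  have "fdiff x y = B + int k" using fdiff_unique[OF k below] .
  then show ?thesis using k below by simp
qed

lemma fdiff_sym: "fdiff x y = fdiff y x"
proof -
  have "(\<lambda>n. x n \<noteq> y n \<and> (\<forall>m<n. x m = y m)) = (\<lambda>n. y n \<noteq> x n \<and> (\<forall>m<n. y m = x m))"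
    by (rule ext) auto
  then show ?thesis unfolding fdiff_def by simp
qed

lemma fdiff_le:
  assumes "lowb x B" "lowb y B" "x n \<noteq> y n"
  shows "fdiff x y \<le> n"
proof (rule ccontr)
  assume "\<not> fdiff x y \<le> n"
  then have "n < fdiff x y" by simp
  moreover have "x \<noteq> y" using assms(3) by auto
  ultimately have "x n = y n" using fdiff_props[OF assms(1,2)] by blast
  then show False using assms(3) by simp
qed

definition pval_at :: "(int \<Rightarrow> nat) \<Rightarrow> int \<Rightarrow> bool" where
  "pval_at z n \<longleftrightarrow> z n \<noteq> 0 \<and> (\<forall>m<n. z m = 0)"

lemma pval_unique:
  assumes "z n \<noteq> 0" "\<forall>m<n. z m = 0"
  shows "pval z = n"
  unfolding pval_def
proof (rule the_equality)
  show "z n \<noteq> 0 \<and> (\<forall>m<n. z m = 0)" using assms by blast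
  fix n' assume n': "z n' \<noteq> 0 \<and> (\<forall>m<n'. z m = 0)"
  show "n' = n"
  proof (rule ccontr)
    assume "n' \<noteq> n"
    then have "n' < n \<or> n < n'" by linarith
    then show False using n' assms by auto
  qed
qed

lemma pval_psub:
  assumes p: "prime p" and xy: "x \<in> Qp p" "y \<in> Qp p" "x \<noteq> y"
  shows "pval (psub p x y) = fdiff x y"
proof -
  have p0: "p > 0" using p prime_gt_0_nat by blast
  define z where "z = psub p x y"
  have zs: "psub_spec p x y z" unfolding z_def by (rule psub_spec_holds[OF p0 xy(1,2)])
  then have zQ: "z \<in> Qp p" by (simp add: psub_spec_def)
  obtain B where B: "\<forall>w\<in>{x, y, z}. lowb w B" using finite_lowb[of "{x, y, z}" p 0] xy zQ by auto
  define d where "d = fdiff x y"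
  have d: "B \<le> d" "x d \<noteq> y d" "\<forall>m<d. x m = y m" using fdiff_props[of x B y] B xy unfolding d_def by auto
  define L where "L = nat (d - B)"
  have dL: "d = B + int L" using d unfolding L_def by simp
  have Sxy: "Sn p B x L = Sn p B y L"
    by (rule Sn_cong) (use d dL in auto)
  have cong: "int p ^ nat (k - B) dvd Sn p B z (nat (k - B)) - (Sn p B x (nat (k - B)) - Sn p B y (nat (k - B)))"
    if "B \<le> k" for k
  proof -
    have "pcong p k (ptrunc p z k) (ptrunc p x k - ptrunc p y k)" using zs by (simp add: psub_spec_def)
    then have "pcong p k (of_int (Sn p B z (nat (k - B))) * real p powi B)
        (of_int (Sn p B x (nat (k - B)) - Sn p B y (nat (k - B))) * real p powi B)"
      using ptrunc_Sn[of z B p k] ptrunc_Sn[of x B p k] ptrunc_Sn[of y B p k] B p0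
      by (simp add: algebra_simps)
    then show ?thesis using pcong_scaled_rev[OF p0 that] by simp
  qed
  have "int p ^ L dvd Sn p B z L" using cong[of d] d Sxy unfolding L_def by simp
  then have SzL: "Sn p B z L = 0"
    using bounded_dvd_eq[of "Sn p B z L" "int p ^ L" 0] Sn_nonneg[of p B z L]
      Sn_less[of z p B L] zQ p0 by (simp add: Qp_digit)
  have zbelow: "\<forall>m<d. z m = 0"
  proof (intro allI impI)
    fix m assume m: "m < d"
    show "z m = 0"
    proof (cases "m < B")
      case True then show ?thesis using B by (simp add: lowb_def)
    next
      case False
      then have "nat (m - B) < L" using m dL by simp
      then have "z (B + int (nat (m - B))) = 0" using Sn_zero_digits[OF SzL p0] by blast
      then show ?thesis using False by simp
    qed
  qed
  have "int p ^ Suc L dvd Sn p B z (Suc L) - (Sn p B x (Suc L) - Sn p B y (Suc L))"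
    using cong[of "d + 1"] d dL by (simp add: nat_add_distrib)
  then have "int p ^ L * int p dvd int p ^ L * (int (z d) - int (x d) + int (y d))"
    using SzL Sxy dL by (simp add: Sn_Suc algebra_simps)
  then have pd: "int p dvd int (z d) - int (x d) + int (y d)"
    using p0 by (simp add: dvd_mult_cancel_left)
  have "z d \<noteq> 0"
  proof
    assume "z d = 0"
    then have "int p dvd int (y d) - int (x d)" using pd by simp
    moreover have "int (y d) - int (x d) \<noteq> 0" using d by simp
    moreover have "\<bar>int (y d) - int (x d)\<bar> < int p"
    proof -
      have "x d < p" "y d < p" using xy by (auto simp: Qp_digit)
      then show ?thesis by linarith
    qed
    ultimately show False using dvd_imp_le_int[of "int (y d) - int (x d)" "int p"] by simp
  qed
  then show ?thesis unfolding z_def[symmetric] d_def[symmetric] using pval_unique zbelow by blast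
qed

lemma admissible_orders_eq:
  assumes "prime p" "F \<subseteq> Qp p"
  shows "admissible_orders p F = {fdiff x y | x y. x \<in> F \<and> y \<in> F \<and> x \<noteq> y}"
proof -
  have eq: "pval (psub p x y) = fdiff x y" if "x \<in> F" "y \<in> F" "x \<noteq> y" for x y
    using pval_psub[OF assms(1)] assms(2) that by blast
  show ?thesis
  proof (intro set_eqI iffI)
    fix t assume "t \<in> admissible_orders p F"
    then obtain x y where xy: "x \<in> F" "y \<in> F" "x \<noteq> y" "t = pval (psub p x y)"
      unfolding admissible_orders_def by blast
    then have "t = fdiff x y" using eq by simp
    then show "t \<in> {fdiff x y |x y. x \<in> F \<and> y \<in> F \<and> x \<noteq> y}" using xy by blast
  next
    fix t assume "t \<in> {fdiff x y |x y. x \<in> F \<and> y \<in> F \<and> x \<noteq> y}"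
    then obtain x y where xy: "x \<in> F" "y \<in> F" "x \<noteq> y" "t = fdiff x y" by blast
    then have "t = pval (psub p x y)" using eq by simp
    then show "t \<in> admissible_orders p F" using xy unfolding admissible_orders_def by blast
  qed
qed

definition Ech :: "nat \<Rightarrow> int \<Rightarrow> complex" where
  "Ech P m = cis (2 * pi * (of_int m / of_nat P))"

lemma Ech_add: "Ech P (a + b) = Ech P a * Ech P b"
proof -
  have "2 * pi * (of_int (a + b) / of_nat P) = 2 * pi * (of_int a / of_nat P) + 2 * pi * (of_int b / of_nat P)"
    by (simp add: add_divide_distrib distrib_left)
  then show ?thesis unfolding Ech_def cis_mult by simp
qed

lemma Ech_0[simp]: "Ech P 0 = 1"
  by (simp add: Ech_def)

lemma Ech_mult_P:
  assumes "P > 0"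
  shows "Ech P (int P * t) = 1"
proof -
  have "2 * pi * (of_int (int P * t) / of_nat P) = 2 * pi * of_int t" using assms by simp
  then show ?thesis unfolding Ech_def by (simp add: cis_multiple_2pi)
qed

lemma Ech_cnj: "cnj (Ech P a) = Ech P (- a)"
  unfolding Ech_def by (simp add: cis_cnj)

lemma Ech_norm: "Ech P a * cnj (Ech P a) = 1"
  unfolding Ech_cnj Ech_add[symmetric] by simp

lemma Ech_dvd_eq:
  assumes "P > 0" "int P dvd (a - b)"
  shows "Ech P a = Ech P b"
proof -
  obtain t where "a - b = int P * t" using assms(2) by (rule dvdE)
  then have "a = b + int P * t" by simp
  then show ?thesis using Ech_add[of P b "int P * t"] Ech_mult_P[OF assms(1)] by simp
qed

lemma Ech_pow:
  assumes "P > 0"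
  shows "Ech P a = cis (2 * pi / real P) ^ nat (a mod int P)"
proof -
  have d: "int P dvd a - a mod int P" by (simp add: minus_mod_eq_mult_div)
  have "Ech P a = Ech P (a mod int P)"
    using assms d by (rule Ech_dvd_eq)
  also have "\<dots> = cis (real (nat (a mod int P)) * (2 * pi / real P))"
  proof -
    have "2 * pi * (of_int (a mod int P) / of_nat P) = real (nat (a mod int P)) * (2 * pi / real P)"
      using assms by simp
    then show ?thesis unfolding Ech_def by (rule arg_cong[where f = cis])
  qed
  also have "\<dots> = cis (2 * pi / real P) ^ nat (a mod int P)"
    by (rule Complex.DeMoivre[symmetric])
  finally show ?thesis .
qed

lemma Ech_ne1:
  assumes "P > 0" "\<not> int P dvd a"
  shows "Ech P a \<noteq> 1"
  using cis_eq_1_dvd[of a P] assms unfolding Ech_def by blast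

lemma Sn_prod_dvd:
  assumes "L \<le> L'"
  shows "int p ^ L dvd Sn p B x L' * Sn p B y L' - Sn p B x L * Sn p B y L"
proof -
  obtain a where a: "Sn p B x L' = Sn p B x L + int p ^ L * a" using Sn_dvd[OF assms, of p B x]
    using dvd_diff_ex by blast
  obtain b where b: "Sn p B y L' = Sn p B y L + int p ^ L * b" using Sn_dvd[OF assms, of p B y]
    using dvd_diff_ex by blast
  have "Sn p B x L' * Sn p B y L' - Sn p B x L * Sn p B y L
      = int p ^ L * (a * Sn p B y L + Sn p B x L * b + int p ^ L * a * b)"
    unfolding a b by (simp add: algebra_simps)
  then show ?thesis by simp
qed

lemma pchi_formula:
  assumes p: "prime p" and xy: "x \<in> Qp p" "y \<in> Qp p" and B: "lowb x B" "lowb y B" "B \<le> 0"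
    and L: "nat (- 2 * B) \<le> L"
  shows "pchi_y p x y = Ech (p ^ nat (- 2 * B)) (Sn p B x L * Sn p B y L)"
proof -
  have p0: "p > 0" using p prime_gt_0_nat by blast
  define M where "M = nat (- 2 * B)"
  define z where "z = pmul p x y"
  have zs: "pmul_spec p x y z" unfolding z_def by (rule pmul_spec_holds[OF p0 xy])
  then obtain K where K: "\<forall>K'\<ge>K. pcong p 0 (ptrunc p z 0) (ptrunc p x K' * ptrunc p y K')"
    unfolding pmul_spec_def by blast
  define K' where "K' = max K (B + int L)"
  define L' where "L' = nat (K' - B)"
  have LL: "L \<le> L'" unfolding L'_def K'_def by simp
  obtain m :: int where m: "ptrunc p z 0 - ptrunc p x K' * ptrunc p y K' = of_int m"
    using K[rule_format, of K'] unfolding pcong_def K'_def by auto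
  have pp: "real p powi B * real p powi B = real p powi (B + B)"
    using p0 power_int_add[of "real p" B B] by simp
  have BB: "B + B = - int M" unfolding M_def using B(3) by simp
  have e2: "real p powi (B + B) = 1 / real (p ^ M)"
    unfolding BB by (simp add: power_int_minus divide_inverse)
  have T: "ptrunc p x K' * ptrunc p y K' = of_int (Sn p B x L' * Sn p B y L') * real p powi (B + B)"
    using ptrunc_Sn[OF B(1) p0, of K'] ptrunc_Sn[OF B(2) p0, of K'] pp
    by (simp add: L'_def algebra_simps)
  obtain t where t: "Sn p B x L' * Sn p B y L' = Sn p B x L * Sn p B y L + int p ^ L * t"
    using Sn_prod_dvd[OF LL, of p B x y] using dvd_diff_ex by blast
  define S where "S = Sn p B x L * Sn p B y L"
  have pL: "real p ^ L = real p ^ (L - M) * real (p ^ M)"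
    using L unfolding M_def by (simp add: power_add[symmetric])
  have "ptrunc p z 0 = of_int S / real (p ^ M) + of_int (m + t * int p ^ (L - M))"
  proof -
    have "ptrunc p z 0 = of_int m + of_int (S + int p ^ L * t) / real (p ^ M)"
      using m T t e2 unfolding S_def by (simp add: algebra_simps add_divide_distrib)
    also have "\<dots> = of_int S / real (p ^ M) + of_int (m + t * int p ^ (L - M))"
      using pL p0 by (simp add: add_divide_distrib algebra_simps)
    finally show ?thesis .
  qed
  then have eq: "2 * pi * pfrac p z = 2 * pi * (of_int S / real (p ^ M)) + 2 * pi * of_int (m + t * int p ^ (L - M))"
    unfolding pfrac_def by (simp add: algebra_simps)
  have "pchi p z = cis (2 * pi * (of_int S / real (p ^ M)) + 2 * pi * of_int (m + t * int p ^ (L - M)))"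
    unfolding pchi_def eq ..
  also have "\<dots> = cis (2 * pi * (of_int S / real (p ^ M))) * cis (2 * pi * of_int (m + t * int p ^ (L - M)))"
    by (rule cis_mult[symmetric])
  also have "cis (2 * pi * of_int (m + t * int p ^ (L - M))) = 1"
    by (rule cis_multiple_2pi) simp
  finally show ?thesis unfolding pchi_y_def z_def[symmetric] Ech_def S_def M_def by simp
qed



definition full :: "nat \<Rightarrow> (int \<Rightarrow> nat) set \<Rightarrow> int \<Rightarrow> bool" where
  "full p X g \<longleftrightarrow> (\<forall>x\<in>X. \<forall>a<p. \<exists>y\<in>X. (\<forall>n<g. y n = x n) \<and> y g = a)"

lemma restrict_in_PiE:
  assumes "X \<subseteq> Qp p" "x \<in> X"
  shows "restrict x J \<in> PiE J (\<lambda>_. {..<p})"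
  using assms by (auto simp: Qp_digit)

lemma card_PiE_const: "finite J \<Longrightarrow> card (PiE J (\<lambda>_. {..<p::nat})) = p ^ card J"
  by (simp add: card_PiE)

lemma inj_restrict:
  assumes lb: "\<forall>x\<in>X. lowb x B" and dJ: "\<And>x y. x \<in> X \<Longrightarrow> y \<in> X \<Longrightarrow> x \<noteq> y \<Longrightarrow> fdiff x y \<in> J"
  shows "inj_on (\<lambda>x. restrict x J) X"
proof (rule inj_onI, rule ccontr)
  fix x y assume xy: "x \<in> X" "y \<in> X" "restrict x J = restrict y J" "x \<noteq> y"
  have "fdiff x y \<in> J" using dJ xy by blast
  moreover have "x (fdiff x y) \<noteq> y (fdiff x y)" using fdiff_props[of x B y] lb xy by blast
  ultimately show False using xy(3) by (metis restrict_apply')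
qed

lemma card_le_PiE:
  assumes X: "finite X" "X \<subseteq> Qp p" and lb: "\<forall>x\<in>X. lowb x B" and J: "finite J"
    and dJ: "\<And>x y. x \<in> X \<Longrightarrow> y \<in> X \<Longrightarrow> x \<noteq> y \<Longrightarrow> fdiff x y \<in> J"
  shows "card X \<le> p ^ card J"
proof -
  have "card X = card ((\<lambda>x. restrict x J) ` X)"
    using inj_restrict[OF lb dJ] by (simp add: card_image)
  also have "\<dots> \<le> card (PiE J (\<lambda>_. {..<p}))"
  proof (rule card_mono)
    show "finite (PiE J (\<lambda>_. {..<p}))" using J by (simp add: finite_PiE)
    show "(\<lambda>x. restrict x J) ` X \<subseteq> PiE J (\<lambda>_. {..<p})"
      using restrict_in_PiE[OF X(2)] by blast
  qed
  also have "\<dots> = p ^ card J" using J by (rule card_PiE_const)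
  finally show ?thesis .
qed

lemma surj_lemma:
  assumes S: "finite S" and fl: "\<forall>g\<in>S. full p X g" and c: "c \<in> X" and a: "\<forall>g\<in>S. a g < p"
  shows "\<exists>e\<in>X. (\<forall>g\<in>S. e g = a g) \<and> (\<forall>n. (\<forall>g\<in>S. n < g) \<longrightarrow> e n = c n)"
proof -
  have "(\<forall>g\<in>S. full p X g) \<longrightarrow> (\<forall>g\<in>S. a g < p) \<longrightarrow>
        (\<exists>e\<in>X. (\<forall>g\<in>S. e g = a g) \<and> (\<forall>n. (\<forall>g\<in>S. n < g) \<longrightarrow> e n = c n))"
    using S
  proof (induction S rule: finite_linorder_max_induct)
    case empty
    then show ?case using c by auto
  next
    case (insert b A)
    show ?case
    proof (intro impI)
      assume f: "\<forall>g\<in>insert b A. full p X g" and av: "\<forall>g\<in>insert b A. a g < p"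
      obtain e where e: "e \<in> X" "\<forall>g\<in>A. e g = a g" "\<forall>n. (\<forall>g\<in>A. n < g) \<longrightarrow> e n = c n"
        using insert.IH f av by auto
      have "full p X b" using f by auto
      then obtain y where y: "y \<in> X" "\<forall>n<b. y n = e n" "y b = a b"
        unfolding full_def using e(1) av by blast
      have "\<forall>g\<in>insert b A. y g = a g" using y e(2) insert.hyps(2) by auto
      moreover have "\<forall>n. (\<forall>g\<in>insert b A. n < g) \<longrightarrow> y n = c n" using y e(3) by auto
      ultimately show "\<exists>e\<in>X. (\<forall>g\<in>insert b A. e g = a g) \<and> (\<forall>n. (\<forall>g\<in>insert b A. n < g) \<longrightarrow> e n = c n)"
        using y(1) by blast
    qed
  qed
  then show ?thesis using fl a by blast
qed

lemma card_ge_full: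
  assumes X: "finite X" "X \<noteq> {}" and S: "finite S" and fl: "\<forall>g\<in>S. full p X g"
  shows "p ^ card S \<le> card X"
proof -
  obtain c where c: "c \<in> X" using X by blast
  have "PiE S (\<lambda>_. {..<p}) \<subseteq> (\<lambda>x. restrict x S) ` X"
  proof
    fix a assume a: "a \<in> PiE S (\<lambda>_. {..<p})"
    then have av: "\<forall>g\<in>S. a g < p" by auto
    obtain e where e: "e \<in> X" "\<forall>g\<in>S. e g = a g"
      using surj_lemma[OF S fl c av] by blast
    have "restrict e S = a"
    proof
      fix g show "restrict e S g = a g"
        using e a by (cases "g \<in> S") (auto simp: PiE_def extensional_def)
    qed
    then show "a \<in> (\<lambda>x. restrict x S) ` X" using e(1) by blast
  qed
  then have "card (PiE S (\<lambda>_. {..<p})) \<le> card ((\<lambda>x. restrict x S) ` X)"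
    using X by (intro card_mono) auto
  also have "\<dots> \<le> card X" using X by (intro card_image_le) auto
  finally show ?thesis using card_PiE_const[OF S, of p] by simp
qed

lemma full_in_dset:
  assumes "full p X g" "x \<in> X" "p \<ge> 2"
  shows "\<exists>y\<in>X. x \<noteq> y \<and> fdiff x y = g"
proof -
  have "(x g + 1) mod p < p" using assms(3) by simp
  then obtain y where y: "y \<in> X" "\<forall>n<g. y n = x n" "y g = (x g + 1) mod p"
    using assms(1,2) unfolding full_def by blast
  have "y g \<noteq> x g"
  proof
    assume "y g = x g"
    then have "(x g + 1) mod p = x g" using y by simp
    then show False using assms(3)
    proof -
      assume h: "(x g + 1) mod p = x g" and p2: "p \<ge> 2"
      consider "x g + 1 < p" | "x g + 1 = p" | "x g \<ge> p" by linarith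
      then show False
      proof cases
        case 1 then show ?thesis using h by simp
      next
        case 2 then show ?thesis using h p2 by simp
      next
        case 3
        have "(x g + 1) mod p < p" using p2 by simp
        then show ?thesis using h 3 by simp
      qed
    qed
  qed
  then have "fdiff x y = g" using y by (intro fdiff_unique) auto
  moreover have "x \<noteq> y" using \<open>y g \<noteq> x g\<close> by auto
  ultimately show ?thesis using y(1) by blast
qed


lemma mod_succ_diff:
  fixes n p :: nat
  assumes "p > 0"
  shows "int p dvd (int ((n + 1) mod p) - int n - 1)"
proof -
  have e: "int ((n + 1) mod p) = (int n + 1) mod int p" using zmod_int[of "n + 1" p] by (simp add: ac_simps)
  have "int p dvd (int n + 1) - (int n + 1) mod int p" by (rule dvd_minus_mod)
  then have "int p dvd - ((int n + 1) mod int p - (int n + 1))" by simp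
  then show ?thesis unfolding e by (simp only: dvd_minus_iff) (simp add: algebra_simps)
qed

lemma succ_mod_inj:
  fixes a b p :: nat
  assumes "a < p" "b < p" "(a + 1) mod p = (b + 1) mod p"
  shows "a = b"
proof -
  consider "a + 1 < p" "b + 1 < p" | "a + 1 = p" "b + 1 < p" | "a + 1 < p" "b + 1 = p" | "a + 1 = p" "b + 1 = p"
    using assms(1,2) by linarith
  then show ?thesis
  proof cases
    case 1 then show ?thesis using assms(3) by simp
  next
    case 2 then show ?thesis using assms(3) by simp
  next
    case 3 then show ?thesis using assms(3) by simp
  next
    case 4 then show ?thesis by simp
  qed
qed

lemma succ_mod_neq:
  fixes a p :: nat
  assumes "p \<ge> 2"
  shows "(a + 1) mod p \<noteq> a"
proof
  assume h: "(a + 1) mod p = a"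
  consider "a + 1 < p" | "a + 1 = p" | "a \<ge> p" by linarith
  then show False
  proof cases
    case 1 then show ?thesis using h by simp
  next
    case 2 then show ?thesis using h assms by simp
  next
    case 3
    have "(a + 1) mod p < p" using assms by simp
    then show ?thesis using h 3 by simp
  qed
qed

lemma pow_split1:
  fixes a :: "'a::comm_monoid_mult"
  assumes "M \<ge> 1"
  shows "a ^ M = a ^ (M - 1) * a"
  using assms by (cases M) (simp_all add: mult.commute)

lemma pow_not_dvd:
  fixes u :: int
  assumes "p > 0" "M \<ge> 1" "\<not> int p dvd u"
  shows "\<not> int (p ^ M) dvd int p ^ (M - 1) * u"
proof
  assume h: "int (p ^ M) dvd int p ^ (M - 1) * u"
  have "int (p ^ M) = int p ^ (M - 1) * int p" using pow_split1[OF assms(2), of "int p"] by simp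
  then have "int p ^ (M - 1) * int p dvd int p ^ (M - 1) * u" using h by simp
  then have "int p dvd u" using assms(1) by (simp add: dvd_mult_cancel_left)
  then show False using assms(3) by simp
qed

lemma rotation:
  assumes p: "prime p" and X: "finite X" "X \<subseteq> Qp p" and lb: "\<forall>x\<in>X. lowb x B"
    and bij: "bij_betw (\<lambda>x. restrict x J) X (PiE J (\<lambda>_. {..<p}))"
    and dJ: "\<And>x y. x \<in> X \<Longrightarrow> y \<in> X \<Longrightarrow> x \<noteq> y \<Longrightarrow> fdiff x y \<in> J"
    and g: "g \<in> J" and M: "M \<ge> 1"
    and G: "\<And>x y. x \<in> X \<Longrightarrow> y \<in> X \<Longrightarrow> (\<forall>n<g. x n = y n) \<Longrightarrow>
      int p ^ M dvd G * (Sn p B x L - Sn p B y L) - int p ^ (M - 1) * u * (int (x g) - int (y g))"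
    and u: "\<not> int p dvd u"
  shows "(\<Sum>x\<in>X. Ech (p ^ M) (G * Sn p B x L)) = 0"
proof -
  have p0: "p > 0" and p2: "p \<ge> 2" using p prime_gt_0_nat prime_ge_2_nat by auto
  define Phi where "Phi = (\<lambda>x::int \<Rightarrow> nat. restrict x J)"
  define rot where "rot a = a(g := (a g + 1) mod p)" for a :: "int \<Rightarrow> nat"
  define sig where "sig x = the_inv_into X Phi (rot (Phi x))" for x
  have bij': "bij_betw Phi X (PiE J (\<lambda>_. {..<p}))" using bij unfolding Phi_def .
  have rotP: "rot a \<in> PiE J (\<lambda>_. {..<p})" if "a \<in> PiE J (\<lambda>_. {..<p})" for a
    using that g p0 unfolding rot_def PiE_iff extensional_def by auto
  have PhiP: "Phi x \<in> PiE J (\<lambda>_. {..<p})" if "x \<in> X" for x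
    unfolding Phi_def using restrict_in_PiE[OF X(2) that] .
  have sigX: "sig x \<in> X" and Phisig: "Phi (sig x) = rot (Phi x)" if x: "x \<in> X" for x
  proof -
    have r: "rot (Phi x) \<in> PiE J (\<lambda>_. {..<p})" by (rule rotP[OF PhiP[OF x]])
    show "sig x \<in> X" unfolding sig_def
      by (rule bij_betw_apply[OF bij_betw_the_inv_into[OF bij'] r])
    show "Phi (sig x) = rot (Phi x)" unfolding sig_def
      using f_the_inv_into_f_bij_betw[OF bij' r] .
  qed
  have rot_inj: "a = b" if "a \<in> PiE J (\<lambda>_. {..<p})" "b \<in> PiE J (\<lambda>_. {..<p})" "rot a = rot b" for a b
  proof
    fix n show "a n = b n"
    proof (cases "n = g")
      case True
      have "a g < p" "b g < p" using PiE_mem[OF that(1) g] PiE_mem[OF that(2) g] by auto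
      moreover have "(a g + 1) mod p = (b g + 1) mod p"
        using fun_cong[OF that(3), of g] unfolding rot_def by simp
      ultimately show ?thesis using True succ_mod_inj by blast
    next
      case False
      then show ?thesis using fun_cong[OF that(3), of n] unfolding rot_def by simp
    qed
  qed
  have sig_inj: "inj_on sig X"
  proof (rule inj_onI)
    fix x y assume xy: "x \<in> X" "y \<in> X" "sig x = sig y"
    then have "rot (Phi x) = rot (Phi y)" using Phisig[OF xy(1)] Phisig[OF xy(2)] by simp
    then have "Phi x = Phi y" using rot_inj PhiP xy by blast
    then show "x = y" using bij' xy unfolding bij_betw_def inj_on_def by blast
  qed
  have sig_img: "sig ` X = X"
    using endo_inj_surj[OF X(1) _ sig_inj] sigX by blast
  have sig_g: "sig x g = (x g + 1) mod p" if x: "x \<in> X" for x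
  proof -
    have "sig x g = Phi (sig x) g" unfolding Phi_def using g by simp
    also have "\<dots> = rot (Phi x) g" using Phisig[OF x] by simp
    also have "\<dots> = (x g + 1) mod p" unfolding rot_def Phi_def using g by simp
    finally show ?thesis .
  qed
  have sig_agree: "\<forall>n<g. sig x n = x n" if x: "x \<in> X" for x
  proof -
    have ne: "sig x g \<noteq> x g" using sig_g[OF x] succ_mod_neq[OF p2] by simp
    then have sx: "sig x \<noteq> x" by auto
    define d where "d = fdiff (sig x) x"
    have dJ': "d \<in> J" unfolding d_def using dJ[OF sigX[OF x] x sx] .
    have dp: "sig x d \<noteq> x d" "\<forall>m<d. sig x m = x m"
      using fdiff_props[of "sig x" B x] lb sigX[OF x] x sx unfolding d_def by auto
    have "d \<le> g" unfolding d_def using fdiff_le[of "sig x" B x g] lb sigX[OF x] x ne by auto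
    moreover have "\<not> d < g"
    proof
      assume "d < g"
      then have "d \<noteq> g" by simp
      have "sig x d = Phi (sig x) d" unfolding Phi_def using dJ' by simp
      also have "\<dots> = rot (Phi x) d" using Phisig[OF x] by simp
      also have "\<dots> = x d" unfolding rot_def Phi_def using dJ' \<open>d \<noteq> g\<close> by simp
      finally show False using dp(1) by simp
    qed
    ultimately have "d = g" by simp
    then show ?thesis using dp(2) by simp
  qed
  define w where "w = Ech (p ^ M) (int p ^ (M - 1) * u)"
  have step: "Ech (p ^ M) (G * Sn p B (sig x) L) = Ech (p ^ M) (G * Sn p B x L) * w" if x: "x \<in> X" for x
  proof -
    have h1: "int p ^ M dvd G * (Sn p B (sig x) L - Sn p B x L) - int p ^ (M - 1) * u * (int (sig x g) - int (x g))"
      using G[OF sigX[OF x] x sig_agree[OF x]] .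
    have "int p dvd int (sig x g) - int (x g) - 1" using sig_g[OF x] mod_succ_diff[OF p0] by simp
    then obtain k where k: "int (sig x g) - int (x g) - 1 = int p * k" by (rule dvdE)
    have pM: "int p ^ M = int p ^ (M - 1) * int p" using pow_split1[OF M] .
    have h2: "int p ^ M dvd int p ^ (M - 1) * u * (int (sig x g) - int (x g)) - int p ^ (M - 1) * u"
    proof -
      have "int p ^ (M - 1) * u * (int (sig x g) - int (x g)) - int p ^ (M - 1) * u
          = int p ^ (M - 1) * u * (int (sig x g) - int (x g) - 1)" by (simp add: algebra_simps)
      also have "\<dots> = int p ^ M * (u * k)" unfolding k pM by (simp add: algebra_simps)
      finally show ?thesis by simp
    qed
    have "int p ^ M dvd G * Sn p B (sig x) L - (G * Sn p B x L + int p ^ (M - 1) * u)"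
    proof -
      have eq: "G * Sn p B (sig x) L - (G * Sn p B x L + int p ^ (M - 1) * u)
        = (G * (Sn p B (sig x) L - Sn p B x L) - int p ^ (M - 1) * u * (int (sig x g) - int (x g)))
          + (int p ^ (M - 1) * u * (int (sig x g) - int (x g)) - int p ^ (M - 1) * u)"
        by (simp add: algebra_simps)
      show ?thesis unfolding eq by (rule dvd_add[OF h1 h2])
    qed
    then have "Ech (p ^ M) (G * Sn p B (sig x) L) = Ech (p ^ M) (G * Sn p B x L + int p ^ (M - 1) * u)"
      using p0 by (intro Ech_dvd_eq) simp_all
    then show ?thesis unfolding w_def Ech_add by simp
  qed
  define S where "S = (\<Sum>x\<in>X. Ech (p ^ M) (G * Sn p B x L))"
  have "S = (\<Sum>x\<in>sig ` X. Ech (p ^ M) (G * Sn p B x L))" unfolding S_def sig_img ..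
  also have "\<dots> = (\<Sum>x\<in>X. Ech (p ^ M) (G * Sn p B (sig x) L))"
    by (subst sum.reindex[OF sig_inj]) simp
  also have "\<dots> = (\<Sum>x\<in>X. Ech (p ^ M) (G * Sn p B x L) * w)"
    by (rule sum.cong) (simp_all add: step)
  also have "\<dots> = S * w" unfolding S_def by (simp add: sum_distrib_right)
  finally have "S * (1 - w) = 0" by (simp add: algebra_simps)
  moreover have "w \<noteq> 1" unfolding w_def using p0 pow_not_dvd[OF p0 M u]
    by (intro Ech_ne1) simp_all
  ultimately show ?thesis unfolding S_def by simp
qed


lemma periodic_cnt:
  fixes cnt :: "nat \<Rightarrow> int"
  assumes q0: "q > 0" and per: "\<And>r. r + q < P \<Longrightarrow> cnt r = cnt (r + q)"
  shows "r < P \<Longrightarrow> cnt r = cnt (r mod q)"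
proof (induction r rule: less_induct)
  case (less r)
  show ?case
  proof (cases "r < q")
    case True then show ?thesis by simp
  next
    case False
    define r' where "r' = r - q"
    have r'r: "r' < r" "r' + q = r" using False q0 unfolding r'_def by auto
    have "cnt r' = cnt (r' mod q)" using less.IH[OF r'r(1)] less.prems r'r by simp
    moreover have "cnt r' = cnt r" using per[of r'] r'r less.prems by simp
    moreover have "r' mod q = r mod q" using r'r(2) by (metis mod_add_self2)
    ultimately show ?thesis by simp
  qed
qed

lemma full_from_zero:
  assumes p: "prime p" and X: "finite X" "X \<subseteq> Qp p" and lb: "\<forall>x\<in>X. lowb x B" and M: "M \<ge> 1"
    and Gagree: "\<And>x y. x \<in> X \<Longrightarrow> y \<in> X \<Longrightarrow> (\<forall>n<g. x n = y n) \<Longrightarrow>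
      int p ^ M dvd G * (Sn p B x L - Sn p B y L) - int p ^ (M - 1) * u * (int (x g) - int (y g))"
    and Gdiff: "\<And>x y. x \<in> X \<Longrightarrow> y \<in> X \<Longrightarrow> x \<noteq> y \<Longrightarrow> fdiff x y < g \<Longrightarrow>
      \<not> int p ^ (M - 1) dvd G * (Sn p B x L - Sn p B y L)"
    and u: "\<not> int p dvd u"
    and S: "(\<Sum>x\<in>X. Ech (p ^ M) (G * Sn p B x L)) = 0"
  shows "full p X g"
proof -
  interpret V: vl_ctx p M using p M by unfold_locales
  have p0: "p > 0" and p2: "p \<ge> 2" using p prime_gt_0_nat prime_ge_2_nat by auto
  define P where "P = p ^ M"
  define Q where "Q = p ^ (M - 1)"
  have P0: "P > 0" unfolding P_def using p0 by simp
  have Q0: "Q > 0" unfolding Q_def using p0 by simp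
  have PQ: "P = Q * p" unfolding P_def Q_def using pow_split1[OF M, of p] .
  define j where "j x = G * Sn p B x L" for x
  define h where "h x = nat (j x mod int P)" for x
  define cnt where "cnt r = int (card {x\<in>X. h x = r})" for r
  have hP: "h x < P" for x unfolding h_def using P0 by (simp add: nat_less_iff)
  have hint: "int (h x) = j x mod int P" for x unfolding h_def using P0 by simp
  have "(\<Sum>x\<in>X. Ech P (j x)) = (\<Sum>x\<in>X. V.zeta ^ h x)"
    unfolding h_def V.zeta_def P_def using p0 by (intro sum.cong refl Ech_pow) simp
  also have "\<dots> = (\<Sum>r\<in>{..<P}. (\<Sum>x\<in>{x\<in>X. h x = r}. V.zeta ^ h x))"
    by (rule sum.group[symmetric]) (use X hP in auto)
  also have "\<dots> = (\<Sum>r<P. of_int (cnt r) * V.zeta ^ r)"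
    unfolding cnt_def by (intro sum.cong refl) simp
  finally have sum0: "(\<Sum>r<P. of_int (cnt r) * V.zeta ^ r) = 0"
    using S unfolding j_def P_def by simp
  have per: "cnt r = cnt (r + Q)" if "r + Q < P" for r
    using V.vanishing[of cnt r] sum0 that unfolding P_def Q_def V.q_def by simp
  have perm: "cnt r = cnt (r mod Q)" if "r < P" for r
    using periodic_cnt[of Q P cnt r] Q0 per that by blast
  show ?thesis
    unfolding full_def
  proof (intro ballI allI impI)
    fix x a assume x: "x \<in> X" and a: "a < p"
    define t where "t = (u * (int a - int (x g))) mod int p"
    define r1 where "r1 = nat ((j x + int Q * t) mod int P)"
    have r1P: "r1 < P" unfolding r1_def using P0 by (simp add: nat_less_iff)
    have QdP: "int Q dvd int P" unfolding PQ by simp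
    have "int (r1 mod Q) = int (h x mod Q)"
    proof -
      have "int (r1 mod Q) = ((j x + int Q * t) mod int P) mod int Q"
        unfolding r1_def using P0 Q0 by (simp add: zmod_int)
      also have "\<dots> = (j x + int Q * t) mod int Q" using QdP by (rule mod_mod_cancel)
      also have "\<dots> = j x mod int Q" by simp
      also have "\<dots> = (j x mod int P) mod int Q" using QdP by (rule mod_mod_cancel[symmetric])
      also have "\<dots> = int (h x mod Q)" using hint[of x] by (simp add: zmod_int)
      finally show ?thesis .
    qed
    then have "r1 mod Q = h x mod Q" by simp
    then have "cnt r1 = cnt (h x)" using perm[OF r1P] perm[OF hP[of x]] by simp
    moreover have "cnt (h x) > 0"
    proof -
      have "x \<in> {y\<in>X. h y = h x}" using x by simp
      then have "card {y\<in>X. h y = h x} > 0" using X(1) by (intro card_gt_0_iff[THEN iffD2]) auto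
      then show ?thesis unfolding cnt_def by simp
    qed
    ultimately have "card {y\<in>X. h y = r1} > 0" unfolding cnt_def by simp
    then obtain y where y: "y \<in> X" "h y = r1" by (metis (mono_tags, lifting) card.empty empty_Collect_eq less_irrefl)
    have Pd: "int P dvd j y - (j x + int Q * t)"
    proof -
      have "j y mod int P = (j x + int Q * t) mod int P"
        using hint[of y] y(2) unfolding r1_def using P0 by simp
      then show ?thesis by (simp add: mod_eq_dvd_iff)
    qed
    have Qd: "int Q dvd j y - j x"
    proof -
      have h: "int Q dvd j y - (j x + int Q * t)" using dvd_trans[OF QdP Pd] .
      have e: "j y - j x = (j y - (j x + int Q * t)) + int Q * t" by simp
      show ?thesis unfolding e by (rule dvd_add[OF h]) simp
    qed
    have agree: "\<forall>n<g. y n = x n"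
    proof (rule ccontr)
      assume "\<not> (\<forall>n<g. y n = x n)"
      then obtain n where n: "n < g" "y n \<noteq> x n" by blast
      then have yx: "y \<noteq> x" by auto
      have "fdiff y x \<le> n" using fdiff_le[of y B x n] lb x y n by auto
      then have "fdiff y x < g" using n by simp
      then have "\<not> int p ^ (M - 1) dvd G * (Sn p B y L - Sn p B x L)" using Gdiff[OF y(1) x yx] by simp
      moreover have "G * (Sn p B y L - Sn p B x L) = j y - j x" unfolding j_def by (simp add: algebra_simps)
      ultimately show False using Qd unfolding Q_def by simp
    qed
    have Pa: "int P dvd (j y - j x) - int Q * u * (int (y g) - int (x g))"
      using Gagree[OF y(1) x agree] unfolding j_def P_def Q_def by (simp add: algebra_simps)
    have "int P dvd ((j y - j x) - int Q * u * (int (y g) - int (x g))) - (j y - (j x + int Q * t))"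
      using Pa Pd by (rule dvd_diff)
    moreover have "((j y - j x) - int Q * u * (int (y g) - int (x g))) - (j y - (j x + int Q * t))
        = int Q * (t - u * (int (y g) - int (x g)))" by (simp add: algebra_simps)
    ultimately have "int Q * int p dvd int Q * (t - u * (int (y g) - int (x g)))" unfolding PQ by simp
    then have d1: "int p dvd t - u * (int (y g) - int (x g))" using Q0 by (simp add: dvd_mult_cancel_left)
    have d2: "int p dvd (u * (int a - int (x g))) - t"
      unfolding t_def by (simp add: minus_mod_eq_mult_div[symmetric])
    have "int p dvd (t - u * (int (y g) - int (x g))) + ((u * (int a - int (x g))) - t)"
      using d1 d2 by (rule dvd_add)
    moreover have "(t - u * (int (y g) - int (x g))) + ((u * (int a - int (x g))) - t) = u * (int a - int (y g))"
      by (simp add: algebra_simps)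
    ultimately have "int p dvd u * (int a - int (y g))" by simp
    then have "int p dvd int a - int (y g)" using u p by (simp add: prime_dvd_mult_iff)
    moreover have "\<bar>int a - int (y g)\<bar> < int p"
    proof -
      have "y g < p" using X(2) y(1) by (auto simp: Qp_digit)
      then show ?thesis using a by linarith
    qed
    ultimately have "int a - int (y g) = 0"
      using dvd_imp_le_int[of "int a - int (y g)" "int p"] by (cases "int a - int (y g) = 0") auto
    then have "y g = a" by simp
    then show "\<exists>y\<in>X. (\<forall>n<g. y n = x n) \<and> y g = a" using y(1) agree by blast
  qed
qed



lemma Sn_diff_struct:
  assumes agree: "\<forall>m<d. x m = y m" and dB: "B \<le> d" "d < B + int L"
  shows "\<exists>m. Sn p B x L - Sn p B y L = int p ^ nat (d - B) * (int (x d) - int (y d) + int p * m)"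
proof -
  define i where "i = nat (d - B)"
  define r where "r = L - i - 1"
  have Li: "L = i + (1 + r)" using dB unfolding i_def r_def by linarith
  have dd: "B + int i = d" using dB unfolding i_def by simp
  have split: "Sn p B z L = Sn p B z i + int p ^ i * (int (z d) + int p * Sn p (d + 1) z r)" for z
  proof -
    have "Sn p B z L = Sn p B z i + int p ^ i * Sn p (B + int i) z (1 + r)"
      unfolding Li by (rule Sn_add)
    also have "Sn p (B + int i) z (1 + r) = Sn p d z 1 + int p ^ 1 * Sn p (d + int 1) z r"
      unfolding dd by (rule Sn_add)
    also have "Sn p d z 1 = int (z d)" by (simp add: Sn_def)
    finally show ?thesis by simp
  qed
  have eqi: "Sn p B x i = Sn p B y i"
    by (rule Sn_cong) (use agree dd in auto)
  have "Sn p B x L - Sn p B y L = int p ^ nat (d - B) * (int (x d) - int (y d) + int p * (Sn p (d + 1) x r - Sn p (d + 1) y r))"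
    unfolding split[of x] split[of y] eqi i_def[symmetric] by (simp add: algebra_simps)
  then show ?thesis by blast
qed

lemma G_agree:
  fixes G u m :: int
  assumes G: "G = int p ^ e * (u + int p * m)" and eM: "e + nat (g - B) = M - 1" and M1: "M \<ge> 1"
    and agree: "\<forall>n<g. x n = y n" and gB: "B \<le> g" "g < B + int L"
  shows "int p ^ M dvd G * (Sn p B x L - Sn p B y L) - int p ^ (M - 1) * u * (int (x g) - int (y g))"
proof -
  obtain m' where m': "Sn p B x L - Sn p B y L = int p ^ nat (g - B) * (int (x g) - int (y g) + int p * m')"
    using Sn_diff_struct[OF agree gB] by blast
  define dd where "dd = int (x g) - int (y g)"
  have "G * (Sn p B x L - Sn p B y L) - int p ^ (M - 1) * u * dd
      = int p ^ (e + nat (g - B)) * ((u + int p * m) * (dd + int p * m')) - int p ^ (M - 1) * u * dd"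
    unfolding G m' dd_def by (simp add: power_add algebra_simps)
  also have "\<dots> = int p ^ (M - 1) * int p * (m * dd + u * m' + int p * m * m')"
    unfolding eM by (simp add: algebra_simps)
  also have "\<dots> = int p ^ M * (m * dd + u * m' + int p * m * m')"
    using pow_split1[OF M1, of "int p"] by simp
  finally show ?thesis unfolding dd_def by simp
qed

lemma G_diff:
  fixes G u m :: int
  assumes p: "prime p" and G: "G = int p ^ e * (u + int p * m)" and u: "\<not> int p dvd u"
    and eM: "e + nat (g - B) = M - 1"
    and xy: "x \<in> Qp p" "y \<in> Qp p" "lowb x B" "lowb y B" "x \<noteq> y"
    and fd: "fdiff x y < g" and gL: "g < B + int L"
  shows "\<not> int p ^ (M - 1) dvd G * (Sn p B x L - Sn p B y L)"
proof
  assume h: "int p ^ (M - 1) dvd G * (Sn p B x L - Sn p B y L)"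
  define d where "d = fdiff x y"
  have d: "B \<le> d" "x d \<noteq> y d" "\<forall>m<d. x m = y m" using fdiff_props[OF xy(3,4,5)] unfolding d_def by auto
  obtain m' where m': "Sn p B x L - Sn p B y L = int p ^ nat (d - B) * (int (x d) - int (y d) + int p * m')"
    using Sn_diff_struct[OF d(3) d(1), of L] gL fd unfolding d_def by auto
  define v where "v = int (x d) - int (y d)"
  have pv: "\<not> int p dvd v"
  proof
    assume "int p dvd v"
    moreover have "v \<noteq> 0" using d(2) unfolding v_def by simp
    moreover have "\<bar>v\<bar> < int p"
    proof -
      have "x d < p" "y d < p" using xy by (auto simp: Qp_digit)
      then show ?thesis unfolding v_def by linarith
    qed
    ultimately show False using dvd_imp_le_int[of v "int p"] by simp
  qed
  define f where "f = e + nat (d - B)"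
  have fM: "f + 1 \<le> M - 1" using eM fd d(1) unfolding f_def d_def by linarith
  define W where "W = (u + int p * m) * (v + int p * m')"
  have pW: "\<not> int p dvd W"
  proof
    assume "int p dvd W"
    then have "int p dvd u + int p * m \<or> int p dvd v + int p * m'"
      using p unfolding W_def by (simp add: prime_dvd_mult_iff)
    then show False using u pv by (auto simp: dvd_add_left_iff)
  qed
  have eq: "G * (Sn p B x L - Sn p B y L) = int p ^ f * W"
    unfolding G m' W_def f_def v_def by (simp add: power_add algebra_simps)
  have "int p ^ (f + 1) dvd int p ^ (M - 1)" using fM by (rule le_imp_power_dvd)
  moreover have "int p ^ (M - 1) dvd int p ^ f * W" using h eq by simp
  ultimately have "int p ^ (f + 1) dvd int p ^ f * W" by (rule dvd_trans)
  then have "int p ^ f * int p dvd int p ^ f * W" by (simp add: power_Suc2 del: power_Suc)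
  then have "int p dvd W" using p prime_gt_0_nat[OF p] by (simp add: dvd_mult_cancel_left)
  then show False using pW by simp
qed

definition dset :: "(int \<Rightarrow> nat) set \<Rightarrow> int set" where
  "dset X = {fdiff x y | x y. x \<in> X \<and> y \<in> X \<and> x \<noteq> y}"

lemma finite_dset: "finite X \<Longrightarrow> finite (dset X)"
proof -
  assume "finite X"
  then have "finite ((\<lambda>(x, y). fdiff x y) ` (X \<times> X))" by simp
  moreover have "dset X \<subseteq> (\<lambda>(x, y). fdiff x y) ` (X \<times> X)" unfolding dset_def by auto
  ultimately show ?thesis by (rule finite_subset[rotated])
qed

lemma choose_B:
  assumes "finite A" "A \<subseteq> Qp p" "finite I"
  shows "\<exists>B. B \<le> -1 \<and> (\<forall>x\<in>A. lowb x B) \<and> (\<forall>g\<in>I. B \<le> - \<bar>g\<bar> - 2)"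
proof -
  define N where "N = Max (insert 0 (abs ` I))"
  have N: "\<bar>g\<bar> \<le> N" "0 \<le> N" if "g \<in> I" for g
    unfolding N_def using assms(3) that by (auto intro: Max_ge)
  have N0: "0 \<le> N" unfolding N_def using assms(3) by (auto intro: Max_ge)
  obtain B where B: "B \<le> - N - 2" "\<forall>x\<in>A. lowb x B" using finite_lowb[OF assms(1,2)] by blast
  show ?thesis
  proof (intro exI conjI)
    show "B \<le> -1" using B N0 by linarith
    show "\<forall>x\<in>A. lowb x B" using B by blast
    show "\<forall>g\<in>I. B \<le> - \<bar>g\<bar> - 2" using B N by fastforce
  qed
qed


lemma sum_delta_mult:
  fixes f :: "'a \<Rightarrow> complex"
  assumes "finite F" "x \<in> F"
  shows "(\<Sum>y\<in>F. f y * (if x = y then c else 0)) = f x * c"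
proof -
  have "(\<Sum>y\<in>F. f y * (if x = y then c else 0)) = (\<Sum>y\<in>F. if x = y then f y * c else 0)"
    by (intro sum.cong) auto
  also have "\<dots> = f x * c" using assms by (simp add: sum.delta)
  finally show ?thesis .
qed

lemma sufficiency:
  assumes p: "prime p" and F: "finite F" "F \<noteq> {}" "F \<subseteq> Qp p"
    and card: "card F = p ^ card (dset F)"
  shows "spectral_unif p F"
proof -
  have p0: "p > 0" and p2: "p \<ge> 2" using p prime_gt_0_nat prime_ge_2_nat by auto
  define I where "I = dset F"
  have fI: "finite I" unfolding I_def using finite_dset[OF F(1)] .
  obtain B where B: "B \<le> -1" "\<forall>x\<in>F. lowb x B" "\<forall>g\<in>I. B \<le> - \<bar>g\<bar> - 2"
    using choose_B[OF F(1) F(3) fI] by blast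
  define M where "M = nat (- 2 * B)"
  define L where "L = M"
  define P where "P = p ^ M"
  have M1: "M \<ge> 1" unfolding M_def using B(1) by simp
  have BL: "B + int L = - B" unfolding L_def M_def using B(1) by simp
  define I' where "I' = (\<lambda>g. - g - 1) ` I"
  define Lam where "Lam = {l. (\<forall>n. l n < p) \<and> (\<forall>n. n \<notin> I' \<longrightarrow> l n = 0)}"
  have IB: "B \<le> g \<and> g < B + int L \<and> B \<le> - g - 1 \<and> - g - 1 < B + int L" if "g \<in> I" for g
    using B(3) that BL by fastforce
  have I'B: "B \<le> g' \<and> g' < B + int L" if "g' \<in> I'" for g'
    using that IB unfolding I'_def by auto
  have lbL: "\<forall>l\<in>Lam. lowb l B"
    unfolding Lam_def lowb_def using I'B by fastforce
  have LQ: "Lam \<subseteq> Qp p" using lbL lowb_Qp unfolding Lam_def by blast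
  have fI': "finite I'" unfolding I'_def using fI by simp
  have injneg: "inj_on (\<lambda>g::int. - g - 1) I" by (auto simp: inj_on_def)
  have cI': "card I' = card I" unfolding I'_def using card_image[OF injneg] .
  have bijL: "bij_betw (\<lambda>x. restrict x I') Lam (PiE I' (\<lambda>_. {..<p}))"
  proof (rule bij_betw_byWitness[where f' = "\<lambda>e n. if n \<in> I' then e n else 0"])
    show "\<forall>a\<in>Lam. (\<lambda>n. if n \<in> I' then restrict a I' n else 0) = a"
      unfolding Lam_def by auto
    show "\<forall>a'\<in>PiE I' (\<lambda>_. {..<p}). restrict (\<lambda>n. if n \<in> I' then a' n else 0) I' = a'"
      by (auto simp: PiE_def extensional_def)
    show "(\<lambda>x. restrict x I') ` Lam \<subseteq> PiE I' (\<lambda>_. {..<p})"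
      unfolding Lam_def by auto
    show "(\<lambda>e n. if n \<in> I' then e n else 0) ` PiE I' (\<lambda>_. {..<p}) \<subseteq> Lam"
      unfolding Lam_def using p0 by (auto simp: PiE_def Pi_def)
  qed
  have finL: "finite Lam" using bij_betw_finite[OF bijL] fI' by (simp add: finite_PiE)
  have cardL: "card Lam = card F"
    using bij_betw_same_card[OF bijL] card_PiE_const[OF fI', of p] cI' card unfolding I_def by simp
  have dJL: "fdiff x y \<in> I'" if "x \<in> Lam" "y \<in> Lam" "x \<noteq> y" for x y
  proof -
    have "x (fdiff x y) \<noteq> y (fdiff x y)" using fdiff_props[of x B y] lbL that by auto
    then show ?thesis using that unfolding Lam_def by auto
  qed
  have dJF: "fdiff x y \<in> I" if "x \<in> F" "y \<in> F" "x \<noteq> y" for x y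
    unfolding I_def dset_def using that by blast
  have bijF: "bij_betw (\<lambda>x. restrict x I) F (PiE I (\<lambda>_. {..<p}))"
  proof -
    have inj: "inj_on (\<lambda>x. restrict x I) F" using inj_restrict[OF B(2)] dJF by blast
    have sub: "(\<lambda>x. restrict x I) ` F \<subseteq> PiE I (\<lambda>_. {..<p})" using restrict_in_PiE[OF F(3)] by blast
    have "card ((\<lambda>x. restrict x I) ` F) = card (PiE I (\<lambda>_. {..<p}))"
      using card_image[OF inj] card card_PiE_const[OF fI, of p] unfolding I_def by simp
    then have "(\<lambda>x. restrict x I) ` F = PiE I (\<lambda>_. {..<p})"
      using sub fI by (intro card_subset_eq) (simp_all add: finite_PiE)
    then show ?thesis using inj unfolding bij_betw_def by blast
  qed
  have hML: "nat (- 2 * B) \<le> L" unfolding L_def M_def by simp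
  have chi: "pchi_y p l c = Ech P (Sn p B l L * Sn p B c L)" if "l \<in> Lam" "c \<in> F" for l c
    using pchi_formula[OF p _ _ _ _ _ hML, of l c] LQ F(3) lbL B that unfolding P_def M_def by auto
  have hterm: "pchi_y p l c * cnj (pchi_y p l' c) = Ech P ((Sn p B l L - Sn p B l' L) * Sn p B c L)"
    if "l \<in> Lam" "l' \<in> Lam" "c \<in> F" for l l' c
  proof -
    have "pchi_y p l c * cnj (pchi_y p l' c) = Ech P (Sn p B l L * Sn p B c L) * Ech P (- (Sn p B l' L * Sn p B c L))"
      using chi that by (simp add: Ech_cnj)
    also have "\<dots> = Ech P ((Sn p B l L - Sn p B l' L) * Sn p B c L)"
      unfolding Ech_add[symmetric] by (simp add: algebra_simps)
    finally show ?thesis .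
  qed
  have nF: "card F > 0" using F(1,2) by (simp add: card_gt_0_iff)
  have orth: "unif_inner F (pchi_y p l) (pchi_y p l') = (if l = l' then 1 else 0)"
    if l: "l \<in> Lam" "l' \<in> Lam" for l l'
  proof (cases "l = l'")
    case True
    have "(\<Sum>c\<in>F. pchi_y p l c * cnj (pchi_y p l' c)) = (\<Sum>c\<in>F. 1)"
      using hterm[OF l] True by (intro sum.cong) simp_all
    then show ?thesis unfolding unif_inner_def using True nF by simp
  next
    case False
    define d where "d = fdiff l l'"
    have dI': "d \<in> I'" unfolding d_def using dJL[OF l False] .
    then obtain g where g: "g \<in> I" "d = - g - 1" unfolding I'_def by blast
    have dp: "B \<le> d" "l d \<noteq> l' d" "\<forall>m<d. l m = l' m"
      using fdiff_props[of l B l'] lbL l False unfolding d_def by auto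
    obtain m where m: "Sn p B l L - Sn p B l' L = int p ^ nat (d - B) * (int (l d) - int (l' d) + int p * m)"
      using Sn_diff_struct[OF dp(3) dp(1), of L] I'B[OF dI'] by blast
    define u where "u = int (l d) - int (l' d)"
    have u: "\<not> int p dvd u"
    proof
      assume "int p dvd u"
      moreover have "u \<noteq> 0" using dp(2) unfolding u_def by simp
      moreover have "\<bar>u\<bar> < int p"
      proof -
        have "l d < p" "l' d < p" using l LQ by (auto simp: Qp_digit)
        then show ?thesis unfolding u_def by linarith
      qed
      ultimately show False using dvd_imp_le_int[of u "int p"] by simp
    qed
    have eM: "nat (d - B) + nat (g - B) = M - 1" using IB[OF g(1)] g(2) unfolding M_def by linarith
    have "(\<Sum>c\<in>F. Ech (p ^ M) ((Sn p B l L - Sn p B l' L) * Sn p B c L)) = 0"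
    proof (rule rotation[OF p F(1) F(3) B(2) bijF dJF g(1) M1])
      fix x y assume xy: "x \<in> F" "y \<in> F" "\<forall>n<g. x n = y n"
      show "int p ^ M dvd (Sn p B l L - Sn p B l' L) * (Sn p B x L - Sn p B y L) - int p ^ (M - 1) * u * (int (x g) - int (y g))"
        using G_agree[OF m[folded u_def] eM M1 xy(3)] IB[OF g(1)] by blast
    qed (simp_all add: u)
    then have "(\<Sum>c\<in>F. pchi_y p l c * cnj (pchi_y p l' c)) = 0"
      using hterm[OF l] unfolding P_def by simp
    then show ?thesis unfolding unif_inner_def using False by simp
  qed
  have D: "(\<Sum>mu\<in>Lam. pchi_y p mu x * cnj (pchi_y p mu y)) = (if x = y then of_nat (card F) else 0)"
    if xy: "x \<in> F" "y \<in> F" for x y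
  proof -
    have t2: "pchi_y p mu x * cnj (pchi_y p mu y) = Ech P ((Sn p B x L - Sn p B y L) * Sn p B mu L)"
      if "mu \<in> Lam" for mu
    proof -
      have "pchi_y p mu x * cnj (pchi_y p mu y) = Ech P (Sn p B mu L * Sn p B x L) * Ech P (- (Sn p B mu L * Sn p B y L))"
        using chi that xy by (simp add: Ech_cnj)
      also have "\<dots> = Ech P ((Sn p B x L - Sn p B y L) * Sn p B mu L)"
        unfolding Ech_add[symmetric] by (simp add: algebra_simps)
      finally show ?thesis .
    qed
    show ?thesis
    proof (cases "x = y")
      case True
      have "(\<Sum>mu\<in>Lam. pchi_y p mu x * cnj (pchi_y p mu y)) = (\<Sum>mu\<in>Lam. 1)"
        using t2 True by (intro sum.cong) simp_all
      then show ?thesis using True cardL by simp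
    next
      case False
      define d where "d = fdiff x y"
      have dI: "d \<in> I" unfolding d_def using dJF[OF xy False] .
      define g where "g = - d - 1"
      have gI': "g \<in> I'" unfolding g_def I'_def using dI by blast
      have dp: "B \<le> d" "x d \<noteq> y d" "\<forall>m<d. x m = y m"
        using fdiff_props[of x B y] B(2) xy False unfolding d_def by auto
      obtain m where m: "Sn p B x L - Sn p B y L = int p ^ nat (d - B) * (int (x d) - int (y d) + int p * m)"
        using Sn_diff_struct[OF dp(3) dp(1), of L] IB[OF dI] by blast
      define u where "u = int (x d) - int (y d)"
      have u: "\<not> int p dvd u"
      proof
        assume "int p dvd u"
        moreover have "u \<noteq> 0" using dp(2) unfolding u_def by simp
        moreover have "\<bar>u\<bar> < int p"
        proof -
          have "x d < p" "y d < p" using xy F(3) by (auto simp: Qp_digit)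
          then show ?thesis unfolding u_def by linarith
        qed
        ultimately show False using dvd_imp_le_int[of u "int p"] by simp
      qed
      have eM: "nat (d - B) + nat (g - B) = M - 1" using IB[OF dI] unfolding g_def M_def by linarith
      have "(\<Sum>mu\<in>Lam. Ech (p ^ M) ((Sn p B x L - Sn p B y L) * Sn p B mu L)) = 0"
      proof (rule rotation[OF p finL LQ lbL bijL dJL gI' M1])
        fix a b assume ab: "a \<in> Lam" "b \<in> Lam" "\<forall>n<g. a n = b n"
        show "int p ^ M dvd (Sn p B x L - Sn p B y L) * (Sn p B a L - Sn p B b L) - int p ^ (M - 1) * u * (int (a g) - int (b g))"
          using G_agree[OF m[folded u_def] eM M1 ab(3)] I'B[OF gI'] by blast
      qed (simp_all add: u)
      then show ?thesis using t2 False unfolding P_def by simp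
    qed
  qed
  have compl: "\<exists>Lam0 c. finite Lam0 \<and> Lam0 \<subseteq> Lam \<and> (\<forall>x\<in>F. f x = (\<Sum>mu\<in>Lam0. c mu * pchi_y p mu x))"
    for f :: "(int \<Rightarrow> nat) \<Rightarrow> complex"
  proof (intro exI conjI ballI)
    define c where "c mu = (\<Sum>y\<in>F. f y * cnj (pchi_y p mu y)) / of_nat (card F)" for mu
    show "finite Lam" "Lam \<subseteq> Lam" by (fact finL) simp
    fix x assume x: "x \<in> F"
    have cm: "c mu * pchi_y p mu x = (\<Sum>y\<in>F. f y * (pchi_y p mu x * cnj (pchi_y p mu y))) / of_nat (card F)" for mu
    proof -
      have "c mu * pchi_y p mu x = (\<Sum>y\<in>F. f y * cnj (pchi_y p mu y)) * pchi_y p mu x / of_nat (card F)"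
        unfolding c_def by simp
      also have "\<dots> = (\<Sum>y\<in>F. f y * cnj (pchi_y p mu y) * pchi_y p mu x) / of_nat (card F)"
        by (simp add: sum_distrib_right)
      also have "\<dots> = (\<Sum>y\<in>F. f y * (pchi_y p mu x * cnj (pchi_y p mu y))) / of_nat (card F)"
        by (simp add: mult_ac)
      finally show ?thesis .
    qed
    have "(\<Sum>mu\<in>Lam. c mu * pchi_y p mu x)
        = (\<Sum>mu\<in>Lam. \<Sum>y\<in>F. f y * (pchi_y p mu x * cnj (pchi_y p mu y))) / of_nat (card F)"
      unfolding cm sum_divide_distrib ..
    also have "\<dots> = (\<Sum>y\<in>F. \<Sum>mu\<in>Lam. f y * (pchi_y p mu x * cnj (pchi_y p mu y))) / of_nat (card F)"
      by (subst sum.swap) simp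
    also have "\<dots> = (\<Sum>y\<in>F. f y * (if x = y then of_nat (card F) else 0)) / of_nat (card F)"
      by (intro arg_cong2[where f = "(/)"] sum.cong refl) (simp add: sum_distrib_left[symmetric] D x)
    also have "\<dots> = f x" using sum_delta_mult[OF F(1) x] nF by simp
    finally show "f x = (\<Sum>mu\<in>Lam. c mu * pchi_y p mu x)" by simp
  qed
  show ?thesis
    unfolding spectral_unif_def
    using LQ orth compl by blast
qed


lemma PiE_sub_image:
  assumes S: "finite S" and fl: "\<forall>g\<in>S. full p X g" and c: "c \<in> X"
  shows "PiE S (\<lambda>_. {..<p}) \<subseteq> (\<lambda>x. restrict x S) ` X"
proof
  fix a assume a: "a \<in> PiE S (\<lambda>_. {..<p})"
  then have av: "\<forall>g\<in>S. a g < p" by auto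
  obtain e where e: "e \<in> X" "\<forall>g\<in>S. e g = a g"
    using surj_lemma[OF S fl c av] by blast
  have "restrict e S = a"
  proof
    fix g show "restrict e S g = a g"
      using e a by (cases "g \<in> S") (auto simp: PiE_def extensional_def)
  qed
  then show "a \<in> (\<lambda>x. restrict x S) ` X" using e(1) by blast
qed

lemma necessity:
  assumes p: "prime p" and F: "finite F" "F \<noteq> {}" "F \<subseteq> Qp p" and sp: "spectral_unif p F"
  shows "card F = p ^ card (dset F)"
proof -
  have p0: "p > 0" and p2: "p \<ge> 2" using p prime_gt_0_nat prime_ge_2_nat by auto
  obtain Lam where LQ: "Lam \<subseteq> Qp p"
    and orth: "\<forall>mu\<in>Lam. \<forall>nu\<in>Lam. unif_inner F (pchi_y p mu) (pchi_y p nu) = (if mu = nu then 1 else 0)"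
    and compl: "\<forall>f :: (int \<Rightarrow> nat) \<Rightarrow> complex. \<exists>Lam0 c. finite Lam0 \<and> Lam0 \<subseteq> Lam \<and>
        (\<forall>x\<in>F. f x = (\<Sum>mu\<in>Lam0. c mu * pchi_y p mu x))"
    using sp unfolding spectral_unif_def by blast
  have nF: "card F > 0" using F(1,2) by (simp add: card_gt_0_iff)
  have sumorth: "(\<Sum>x\<in>F. pchi_y p l x * cnj (pchi_y p l' x)) = (if l = l' then of_nat (card F) else 0)"
    if "l \<in> Lam" "l' \<in> Lam" for l l'
  proof -
    have "(\<Sum>x\<in>F. pchi_y p l x * cnj (pchi_y p l' x)) = of_nat (card F) * unif_inner F (pchi_y p l) (pchi_y p l')"
      unfolding unif_inner_def using nF by simp
    then show ?thesis using orth that by simp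
  qed
  have fullA: "full p F (- fdiff l l' - 1)" if ll: "l \<in> Lam" "l' \<in> Lam" "l \<noteq> l'" for l l'
  proof -
    define d where "d = fdiff l l'"
    have fin: "finite (F \<union> {l, l'})" using F(1) by simp
    have sub: "F \<union> {l, l'} \<subseteq> Qp p" using F(3) LQ ll by auto
    obtain B where B: "B \<le> -1" "\<forall>x\<in>F \<union> {l, l'}. lowb x B" "\<forall>g\<in>{d}. B \<le> - \<bar>g\<bar> - 2"
      using choose_B[OF fin sub, of "{d}"] by auto
    define M where "M = nat (- 2 * B)"
    define L where "L = M"
    have M1: "M \<ge> 1" unfolding M_def using B(1) by simp
    have BL: "B + int L = - B" unfolding L_def M_def using B(1) by simp
    have lbF: "\<forall>x\<in>F. lowb x B" using B(2) by blast
    have dp: "B \<le> d" "l d \<noteq> l' d" "\<forall>m<d. l m = l' m"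
      using fdiff_props[of l B l'] B(2) ll unfolding d_def by auto
    define g where "g = - d - 1"
    have gB: "B \<le> g" "g < B + int L" "d < B + int L" using B(3) BL unfolding g_def by auto
    obtain m where m: "Sn p B l L - Sn p B l' L = int p ^ nat (d - B) * (int (l d) - int (l' d) + int p * m)"
      using Sn_diff_struct[OF dp(3) dp(1) gB(3)] by blast
    define u where "u = int (l d) - int (l' d)"
    have u: "\<not> int p dvd u"
    proof
      assume "int p dvd u"
      moreover have "u \<noteq> 0" using dp(2) unfolding u_def by simp
      moreover have "\<bar>u\<bar> < int p"
      proof -
        have "l d < p" "l' d < p" using ll LQ by (auto simp: Qp_digit)
        then show ?thesis unfolding u_def by linarith
      qed
      ultimately show False using dvd_imp_le_int[of u "int p"] by simp
    qed
    have hML: "nat (- 2 * B) \<le> L" unfolding L_def M_def by simp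
    have chi: "pchi_y p k c = Ech (p ^ M) (Sn p B k L * Sn p B c L)" if "k \<in> {l, l'}" "c \<in> F" for k c
      using pchi_formula[OF p _ _ _ _ _ hML, of k c] LQ F(3) B ll that unfolding M_def by auto
    have "(\<Sum>c\<in>F. Ech (p ^ M) ((Sn p B l L - Sn p B l' L) * Sn p B c L))
        = (\<Sum>x\<in>F. pchi_y p l x * cnj (pchi_y p l' x))"
    proof (intro sum.cong refl)
      fix c assume c: "c \<in> F"
      have "pchi_y p l c * cnj (pchi_y p l' c) = Ech (p ^ M) (Sn p B l L * Sn p B c L) * Ech (p ^ M) (- (Sn p B l' L * Sn p B c L))"
        using chi[of l c] chi[of l' c] c by (simp add: Ech_cnj)
      also have "\<dots> = Ech (p ^ M) ((Sn p B l L - Sn p B l' L) * Sn p B c L)"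
        unfolding Ech_add[symmetric] by (simp add: algebra_simps)
      finally show "Ech (p ^ M) ((Sn p B l L - Sn p B l' L) * Sn p B c L) = pchi_y p l c * cnj (pchi_y p l' c)" by simp
    qed
    also have "\<dots> = 0" using sumorth[OF ll(1,2)] ll(3) by simp
    finally have S0: "(\<Sum>c\<in>F. Ech (p ^ M) ((Sn p B l L - Sn p B l' L) * Sn p B c L)) = 0" .
    have eM: "nat (d - B) + nat (g - B) = M - 1" using gB dp(1) unfolding g_def M_def by linarith
    show ?thesis
      unfolding d_def[symmetric] g_def[symmetric]
    proof (rule full_from_zero[OF p F(1) F(3) lbF M1 _ _ u S0])
      fix x y assume xy: "x \<in> F" "y \<in> F" "\<forall>n<g. x n = y n"
      show "int p ^ M dvd (Sn p B l L - Sn p B l' L) * (Sn p B x L - Sn p B y L) - int p ^ (M - 1) * u * (int (x g) - int (y g))"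
        using G_agree[OF m[folded u_def] eM M1 xy(3) gB(1,2)] .
    next
      fix x y assume xy: "x \<in> F" "y \<in> F" "x \<noteq> y" "fdiff x y < g"
      show "\<not> int p ^ (M - 1) dvd (Sn p B l L - Sn p B l' L) * (Sn p B x L - Sn p B y L)"
        using G_diff[OF p m[folded u_def] u eM _ _ _ _ xy(3,4) gB(2)] xy F(3) lbF by auto
    qed
  qed
  define JL where "JL = dset Lam"
  define S where "S = (\<lambda>d. - d - 1) ` JL"
  have Sfull: "\<forall>g\<in>S. full p F g"
    unfolding S_def JL_def dset_def using fullA by blast
  obtain c0 where c0: "c0 \<in> F" using F(2) by blast
  have SI: "S \<subseteq> dset F"
  proof
    fix g assume "g \<in> S"
    then have "full p F g" using Sfull by blast
    then obtain y where "y \<in> F" "c0 \<noteq> y" "fdiff c0 y = g" using full_in_dset[OF _ c0 p2] by blast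
    then show "g \<in> dset F" unfolding dset_def using c0 by blast
  qed
  have finS: "finite S" using finite_subset[OF SI finite_dset[OF F(1)]] .
  have injn: "inj_on (\<lambda>d::int. - d - 1) JL" by (auto simp: inj_on_def)
  have finJL: "finite JL" using finS injn unfolding S_def by (rule finite_imageD)
  have cS: "card S = card JL" unfolding S_def using card_image[OF injn] .
  have bnd: "card L' \<le> p ^ card JL" if L': "finite L'" "L' \<subseteq> Lam" for L'
  proof -
    obtain B where B: "\<forall>x\<in>L'. lowb x B" using finite_lowb[of L' p 0] L' LQ by auto
    show ?thesis
    proof (rule card_le_PiE[OF L'(1) _ B finJL])
      show "L' \<subseteq> Qp p" using L' LQ by blast
      fix x y assume "x \<in> L'" "y \<in> L'" "x \<noteq> y"
      then show "fdiff x y \<in> JL" unfolding JL_def dset_def using L'(2) by blast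
    qed
  qed
  have finL: "finite Lam"
  proof (rule ccontr)
    assume "infinite Lam"
    then obtain L' where "finite L'" "card L' = p ^ card JL + 1" "L' \<subseteq> Lam"
      using infinite_arbitrarily_large by blast
    then show False using bnd by fastforce
  qed
  have c1: "card Lam \<le> p ^ card S" using bnd[OF finL] cS by simp
  have c2: "p ^ card S \<le> card F" using card_ge_full[OF F(1,2) finS Sfull] .
  have c3: "card F \<le> card Lam"
  proof -
    define f where "f x = (if x = c0 then 1 else 0 :: complex)" for x
    obtain L0 a where L0: "finite L0" "L0 \<subseteq> Lam" "\<forall>x\<in>F. f x = (\<Sum>mu\<in>L0. a mu * pchi_y p mu x)"
      using compl by blast
    have coef: "a mu = cnj (pchi_y p mu c0) / of_nat (card F)" if mu: "mu \<in> L0" for mu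
    proof -
      have "(\<Sum>x\<in>F. f x * cnj (pchi_y p mu x)) = cnj (pchi_y p mu c0)"
      proof -
        have "(\<Sum>x\<in>F. f x * cnj (pchi_y p mu x)) = (\<Sum>x\<in>F. if x = c0 then cnj (pchi_y p mu x) else 0)"
          unfolding f_def by (intro sum.cong) auto
        also have "\<dots> = cnj (pchi_y p mu c0)" using F(1) c0 by (simp add: sum.delta')
        finally show ?thesis .
      qed
      moreover have "(\<Sum>x\<in>F. f x * cnj (pchi_y p mu x)) = a mu * of_nat (card F)"
      proof -
        have "(\<Sum>x\<in>F. f x * cnj (pchi_y p mu x)) = (\<Sum>x\<in>F. \<Sum>k\<in>L0. a k * (pchi_y p k x * cnj (pchi_y p mu x)))"
        proof (intro sum.cong refl)
          fix x assume x: "x \<in> F"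
          have "f x * cnj (pchi_y p mu x) = (\<Sum>k\<in>L0. a k * pchi_y p k x) * cnj (pchi_y p mu x)"
            using L0(3) x by simp
          also have "\<dots> = (\<Sum>k\<in>L0. a k * pchi_y p k x * cnj (pchi_y p mu x))"
            by (rule sum_distrib_right)
          also have "\<dots> = (\<Sum>k\<in>L0. a k * (pchi_y p k x * cnj (pchi_y p mu x)))"
            by (simp add: mult_ac)
          finally show "f x * cnj (pchi_y p mu x) = (\<Sum>k\<in>L0. a k * (pchi_y p k x * cnj (pchi_y p mu x)))" .
        qed
        also have "\<dots> = (\<Sum>k\<in>L0. a k * (\<Sum>x\<in>F. pchi_y p k x * cnj (pchi_y p mu x)))"
          by (subst sum.swap) (simp add: sum_distrib_left)
        also have "\<dots> = (\<Sum>k\<in>L0. a k * (if k = mu then of_nat (card F) else 0))"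
          using L0(2) mu by (intro sum.cong refl) (simp add: sumorth subsetD)
        also have "\<dots> = a mu * of_nat (card F)"
        proof -
          have "(\<Sum>k\<in>L0. a k * (if k = mu then of_nat (card F) else 0)) = (\<Sum>k\<in>L0. if k = mu then a k * of_nat (card F) else 0)"
            by (intro sum.cong) auto
          also have "\<dots> = a mu * of_nat (card F)" using L0(1) mu by (simp add: sum.delta')
          finally show ?thesis .
        qed
        finally show ?thesis .
      qed
      ultimately show ?thesis using nF by (simp add: field_simps)
    qed
    have "1 = f c0" unfolding f_def by simp
    also have "\<dots> = (\<Sum>mu\<in>L0. a mu * pchi_y p mu c0)" using L0(3) c0 by blast
    also have "\<dots> = (\<Sum>mu\<in>L0. 1 / of_nat (card F))"
    proof (intro sum.cong refl)
      fix mu assume mu: "mu \<in> L0"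
      have n1: "cnj (pchi_y p mu c0) * pchi_y p mu c0 = 1"
        unfolding pchi_y_def pchi_def by (simp add: cis_cnj cis_mult)
      show "a mu * pchi_y p mu c0 = 1 / of_nat (card F)"
        using coef[OF mu] n1 by (simp add: field_simps)
    qed
    also have "\<dots> = of_nat (card L0) / of_nat (card F)" by simp
    finally have "of_nat (card L0) = (of_nat (card F) :: complex)" using nF by (simp add: field_simps)
    then have "card L0 = card F" by (simp only: of_nat_eq_iff)
    then show ?thesis using card_mono[OF finL L0(2)] by simp
  qed
  have eqc: "card F = p ^ card S" using c1 c2 c3 by linarith
  have imgS: "(\<lambda>x. restrict x S) ` F = PiE S (\<lambda>_. {..<p})"
    using PiE_sub_image[OF finS Sfull c0] restrict_in_PiE[OF F(3)] by blast
  have injS: "inj_on (\<lambda>x. restrict x S) F"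
  proof (rule eq_card_imp_inj_on[OF F(1)])
    show "card ((\<lambda>x. restrict x S) ` F) = card F" unfolding imgS card_PiE_const[OF finS] eqc ..
  qed
  have IS: "dset F \<subseteq> S"
  proof
    fix g assume "g \<in> dset F"
    then obtain c d where cd: "c \<in> F" "d \<in> F" "c \<noteq> d" "fdiff c d = g" unfolding dset_def by blast
    show "g \<in> S"
    proof (rule ccontr)
      assume gS: "g \<notin> S"
      obtain B where B: "\<forall>x\<in>{c, d}. lowb x B" using finite_lowb[of "{c, d}" p 0] cd F(3) by auto
      have cdp: "c g \<noteq> d g" "\<forall>m<g. c m = d m" using fdiff_props[of c B d] B cd by auto
      define S' where "S' = {s\<in>S. g < s}"
      have finS': "finite S'" unfolding S'_def using finS by simp
      have fl': "\<forall>s\<in>S'. full p F s" using Sfull unfolding S'_def by blast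
      have av: "\<forall>s\<in>S'. c s < p" using cd F(3) by (auto simp: Qp_digit)
      obtain e where e: "e \<in> F" "\<forall>s\<in>S'. e s = c s" "\<forall>n. (\<forall>s\<in>S'. n < s) \<longrightarrow> e n = d n"
        using surj_lemma[OF finS' fl' cd(2) av] by blast
      have eg: "e g = d g" using e(3) unfolding S'_def by auto
      have "restrict e S = restrict c S"
      proof
        fix s show "restrict e S s = restrict c S s"
        proof (cases "s \<in> S")
          case True
          show ?thesis
          proof (cases "s < g")
            case True
            then have "e s = d s" using e(3) unfolding S'_def by auto
            then show ?thesis using True cdp(2) \<open>s \<in> S\<close> by simp
          next
            case False
            then have "g < s" using gS \<open>s \<in> S\<close> by (cases "s = g") auto
            then have "e s = c s" using e(2) \<open>s \<in> S\<close> unfolding S'_def by auto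
            then show ?thesis using \<open>s \<in> S\<close> by simp
          qed
        qed simp
      qed
      then have "e = c" using injS e(1) cd(1) unfolding inj_on_def by blast
      then show False using eg cdp(1) by simp
    qed
  qed
  have "dset F = S" using IS SI by blast
  then show ?thesis using eqc by simp
qed

theorem corollary1p5:
  fixes p :: nat and F :: "(int \<Rightarrow> nat) set"
  assumes "prime p" and "finite F" and "F \<noteq> {}" and "F \<subseteq> Qp p"
  shows "spectral_unif p F \<longleftrightarrow> card F = p ^ card (admissible_orders p F)"
proof -
  have "admissible_orders p F = dset F"
    unfolding dset_def using admissible_orders_eq[OF assms(1,4)] .
  then show ?thesis using necessity[OF assms] sufficiency[OF assms] by auto
qed

end
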